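(* Let $N\trianglelefteq G\trianglelefteq H$ be finite groups with $N\trianglelefteq H$, let $b$ be an $H$-stable block of $kG$ covering a block $c$ of $kN$, let $I_H(c)=\{h\in H\mid{}^hc=c\}$, $I_G(c)=I_H(c)\cap G$, and let $\tilde b$ be the Fong correspondent of $b$ in $I_G(c)$. Then there exist a $p$-subgroup $P$ of $I_H(c)$ and a primitive idempotent $i$ of $(kI_G(c)\tilde b)^P$ such that: $P$ is maximal among $p$-subgroups $Q$ of $H$ with $\mathrm{Br}^G_Q(b)\ne0$; $P$ is maximal among $p$-subgroups $Q$ of $I_H(c)$ with $\mathrm{Br}^{I_G(c)}_Q(\tilde b)\neq0$; $i$ is a primitive idempotent of $(kGb)^P$; and $\mathrm{Br}^G_P(i)\ne0$. Thus $i$ is a source idempotent both of the $I_H(c)$-algebra $kI_G(c)\tilde b$ and of the $H$-algebra $kGb$.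
   Context: $k$ is an algebraically closed field of characteristic $p$; blocks are primitive idempotents of $Z(kG)$; $\mathrm{Br}^G_Q:(kG)^Q\to kC_G(Q)$ sends $\sum\alpha_gg$ to $\sum_{g\in C_G(Q)}\alpha_gg$. A block $b$ of $kG$ covers a block $c$ of $kN$ ($N\trianglelefteq G$) if $bc\ne 0$. The Fong correspondent of $b$ is the unique block $\tilde b$ of $kI_G(c)$ covering $c$ with $b=\mathrm{Tr}^G_{I_G(c)}(\tilde b)=\sum_{x\in[G/I_G(c)]}{}^x\tilde b$. A source idempotent of the $H$-algebra $kGb$ is a primitive idempotent $i\in(kGb)^P$ with $\mathrm{Br}^G_P(i)\ne0$, where $P\le H$ is a $p$-subgroup maximal with $\mathrm{Br}^G_P(b)\ne0$. *)

theory Defs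
  imports "HOL-Algebra.Coset" "HOL-Computational_Algebra.Polynomial"
begin

text \<open>Group algebras over a field k of subgroups A of an ambient finite group H are modelled as
  coefficient functions g => k supported in A (sum of alpha_g g corresponds to alpha).
  All multiplications are convolutions inside the ambient group H; kA is then a subalgebra.\<close>

definition grp_alg :: "('g, 'm) monoid_scheme \<Rightarrow> 'g set \<Rightarrow> ('g \<Rightarrow> 'k::field) set" where
  "grp_alg H A = {a. \<forall>x. x \<notin> A \<longrightarrow> a x = 0}"

definition ga_add :: "('g \<Rightarrow> 'k::field) \<Rightarrow> ('g \<Rightarrow> 'k) \<Rightarrow> ('g \<Rightarrow> 'k)" where
  "ga_add a b = (\<lambda>x. a x + b x)"

definition ga_mult :: "('g, 'm) monoid_scheme \<Rightarrow> ('g \<Rightarrow> 'k::field) \<Rightarrow> ('g \<Rightarrow> 'k) \<Rightarrow> ('g \<Rightarrow> 'k)" where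
  "ga_mult H a b = (\<lambda>x. if x \<in> carrier H
      then (\<Sum>y\<in>carrier H. a y * b (inv\<^bsub>H\<^esub> y \<otimes>\<^bsub>H\<^esub> x)) else 0)"

text \<open>Conjugation: ^h (sum alpha_g g) = sum alpha_g (h g h^-1).\<close>
definition ga_conj :: "('g, 'm) monoid_scheme \<Rightarrow> 'g \<Rightarrow> ('g \<Rightarrow> 'k::field) \<Rightarrow> ('g \<Rightarrow> 'k)" where
  "ga_conj H h a = (\<lambda>x. if x \<in> carrier H then a (inv\<^bsub>H\<^esub> h \<otimes>\<^bsub>H\<^esub> x \<otimes>\<^bsub>H\<^esub> h) else 0)"

definition ga_center :: "('g, 'm) monoid_scheme \<Rightarrow> 'g set \<Rightarrow> ('g \<Rightarrow> 'k::field) set" where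
  "ga_center H A = {z \<in> grp_alg H A. \<forall>a \<in> grp_alg H A. ga_mult H z a = ga_mult H a z}"

definition ga_idem :: "('g, 'm) monoid_scheme \<Rightarrow> ('g \<Rightarrow> 'k::field) \<Rightarrow> bool" where
  "ga_idem H e \<longleftrightarrow> ga_mult H e e = e"

definition prim_idem :: "('g, 'm) monoid_scheme \<Rightarrow> ('g \<Rightarrow> 'k::field) set \<Rightarrow> ('g \<Rightarrow> 'k) \<Rightarrow> bool" where
  "prim_idem H S e \<longleftrightarrow> e \<in> S \<and> e \<noteq> (\<lambda>_. 0) \<and> ga_idem H e \<and>
     (\<forall>e1\<in>S. \<forall>e2\<in>S. ga_idem H e1 \<and> ga_idem H e2 \<and> ga_mult H e1 e2 = (\<lambda>_. 0)
        \<and> ga_mult H e2 e1 = (\<lambda>_. 0) \<and> e = ga_add e1 e2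
        \<longrightarrow> e1 = (\<lambda>_. 0) \<or> e2 = (\<lambda>_. 0))"

definition is_block :: "('g, 'm) monoid_scheme \<Rightarrow> 'g set \<Rightarrow> ('g \<Rightarrow> 'k::field) \<Rightarrow> bool" where
  "is_block H A b \<longleftrightarrow> prim_idem H (ga_center H A) b"

definition ga_block_alg :: "('g, 'm) monoid_scheme \<Rightarrow> 'g set \<Rightarrow> ('g \<Rightarrow> 'k::field) \<Rightarrow> ('g \<Rightarrow> 'k) set" where
  "ga_block_alg H A e = {ga_mult H a e | a. a \<in> grp_alg H A}"

definition ga_fixed :: "('g, 'm) monoid_scheme \<Rightarrow> 'g set \<Rightarrow> ('g \<Rightarrow> 'k::field) set \<Rightarrow> ('g \<Rightarrow> 'k) set" where
  "ga_fixed H Q B = {a \<in> B. \<forall>q\<in>Q. ga_conj H q a = a}"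

definition centralizer_in :: "('g, 'm) monoid_scheme \<Rightarrow> 'g set \<Rightarrow> 'g set \<Rightarrow> 'g set" where
  "centralizer_in H A Q = {x \<in> A. \<forall>q\<in>Q. x \<otimes>\<^bsub>H\<^esub> q = q \<otimes>\<^bsub>H\<^esub> x}"

definition brauer :: "('g, 'm) monoid_scheme \<Rightarrow> 'g set \<Rightarrow> 'g set \<Rightarrow> ('g \<Rightarrow> 'k::field) \<Rightarrow> ('g \<Rightarrow> 'k)" where
  "brauer H A Q a = (\<lambda>x. if x \<in> centralizer_in H A Q then a x else 0)"

definition p_subgroup :: "nat \<Rightarrow> 'g set \<Rightarrow> ('g, 'm) monoid_scheme \<Rightarrow> bool" where
  "p_subgroup p Q H \<longleftrightarrow> subgroup Q H \<and> (\<exists>n. card Q = p ^ n)"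

definition max_brauer_pgroup :: "nat \<Rightarrow> ('g, 'm) monoid_scheme \<Rightarrow> 'g set \<Rightarrow> 'g set \<Rightarrow> ('g \<Rightarrow> 'k::field) \<Rightarrow> 'g set \<Rightarrow> bool" where
  "max_brauer_pgroup p H K A e P \<longleftrightarrow>
     p_subgroup p P H \<and> P \<subseteq> K \<and> brauer H A P e \<noteq> (\<lambda>_. 0) \<and>
     (\<forall>Q. p_subgroup p Q H \<and> Q \<subseteq> K \<and> P \<subseteq> Q \<and> brauer H A Q e \<noteq> (\<lambda>_. 0) \<longrightarrow> Q = P)"

definition inertia :: "('g, 'm) monoid_scheme \<Rightarrow> 'g set \<Rightarrow> ('g \<Rightarrow> 'k::field) \<Rightarrow> 'g set" where
  "inertia H K c = {h \<in> K. ga_conj H h c = c}"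

definition ga_trace :: "('g, 'm) monoid_scheme \<Rightarrow> 'g set \<Rightarrow> 'g set \<Rightarrow> ('g \<Rightarrow> 'k::field) \<Rightarrow> ('g \<Rightarrow> 'k)" where
  "ga_trace H A I e = (\<lambda>x. \<Sum>C\<in>{y <#\<^bsub>H\<^esub> I | y. y \<in> A}. ga_conj H (SOME y. y \<in> C) e x)"

end

theory Submission
  imports Defs "HOL-Library.Function_Algebras" "HOL-Algebra.Group_Action"
begin


lemma char_pow_zero:
  assumes "prime p" "CHAR('k::field) = p" "m > 0"
  shows "(of_nat (p ^ m) :: 'k) = 0"
proof -
  have "(of_nat p :: 'k) = 0" using assms(2) by (metis of_nat_CHAR)
  thus ?thesis using assms(3) by (simp add: of_nat_power)
qed

lemma (in group) orbit_sum:
  fixes act :: "'a \<Rightarrow> 'x \<Rightarrow> 'x" and f :: "'x \<Rightarrow> 'k::field"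
  assumes Q: "subgroup Q G" and cQ: "card Q = p ^ n" and p: "prime p" and ch: "CHAR('k) = p"
    and X: "finite X"
    and cl: "\<And>q x. q \<in> Q \<Longrightarrow> x \<in> X \<Longrightarrow> act q x \<in> X"
    and one: "\<And>x. x \<in> X \<Longrightarrow> act \<one> x = x"
    and comp: "\<And>q r x. q \<in> Q \<Longrightarrow> r \<in> Q \<Longrightarrow> x \<in> X \<Longrightarrow> act (q \<otimes> r) x = act q (act r x)"
    and inv: "\<And>q x. q \<in> Q \<Longrightarrow> x \<in> X \<Longrightarrow> f (act q x) = f x"
  shows "(\<Sum>x\<in>X. f x) = (\<Sum>x\<in>{x\<in>X. \<forall>q\<in>Q. act q x = x}. f x)"
proof -
  define QG where "QG = G\<lparr>carrier := Q\<rparr>"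
  have gQ: "group QG" unfolding QG_def by (rule subgroup.subgroup_is_group[OF Q is_group])
  define \<phi> where "\<phi> = (\<lambda>q. \<lambda>x\<in>X. act q x)"
  have Qsub: "Q \<subseteq> carrier G" by (rule subgroup.subset[OF Q])
  have invQ: "inv q \<in> Q" if "q \<in> Q" for q by (rule subgroup.m_inv_closed[OF Q that])
  have actinv: "act (inv q) (act q x) = x" if "q \<in> Q" "x \<in> X" for q x
  proof -
    have e1: "act (inv q) (act q x) = act (inv q \<otimes> q) x" using comp[OF invQ[OF that(1)] that] by simp
    have "inv q \<otimes> q = \<one>" using Qsub that(1) by (intro l_inv) auto
    hence "act (inv q \<otimes> q) x = x" using one that(2) by simp
    thus ?thesis using e1 by simp
  qed
  have actinv2: "act q (act (inv q) x) = x" if "q \<in> Q" "x \<in> X" for q x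
  proof -
    have "inv (inv q) = q" using Qsub that(1) by (intro inv_inv) auto
    thus ?thesis using actinv[OF invQ[OF that(1)] that(2)] by simp
  qed
  have bij: "\<phi> q \<in> Bij X" if q: "q \<in> Q" for q
  proof -
    have "bij_betw (act q) X X"
    proof (rule bij_betw_byWitness[where f'="act (inv q)"])
      show "\<forall>a\<in>X. act (inv q) (act q a) = a" using actinv[OF q] by simp
      show "\<forall>a\<in>X. act q (act (inv q) a) = a" using actinv2[OF q] by simp
      show "act q ` X \<subseteq> X" using cl[OF q] by auto
      show "act (inv q) ` X \<subseteq> X" using cl[OF invQ[OF q]] by auto
    qed
    hence "bij_betw (\<phi> q) X X" unfolding \<phi>_def by (rule bij_betw_cong[THEN iffD1, rotated]) simp
    moreover have "\<phi> q \<in> extensional X" unfolding \<phi>_def by simp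
    ultimately show ?thesis unfolding Bij_def by simp
  qed
  have hom: "\<phi> \<in> hom QG (BijGroup X)"
  proof (rule homI)
    fix q assume "q \<in> carrier QG" thus "\<phi> q \<in> carrier (BijGroup X)"
      using bij by (simp add: QG_def BijGroup_def)
  next
    fix q r assume qr: "q \<in> carrier QG" "r \<in> carrier QG"
    hence qr': "q \<in> Q" "r \<in> Q" by (auto simp: QG_def)
    have m: "\<phi> q \<otimes>\<^bsub>BijGroup X\<^esub> \<phi> r = compose X (\<phi> q) (\<phi> r)"
      using bij[OF qr'(1)] bij[OF qr'(2)] by (simp add: BijGroup_def)
    have "\<phi> (q \<otimes> r) = compose X (\<phi> q) (\<phi> r)"
    proof (rule ext)
      fix x show "\<phi> (q \<otimes> r) x = compose X (\<phi> q) (\<phi> r) x"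
        using comp[OF qr'] cl[OF qr'(2)] by (cases "x \<in> X") (simp_all add: \<phi>_def compose_def)
    qed
    thus "\<phi> (q \<otimes>\<^bsub>QG\<^esub> r) = \<phi> q \<otimes>\<^bsub>BijGroup X\<^esub> \<phi> r" using m by (simp add: QG_def)
  qed
  interpret ga: group_action QG X \<phi>
    by (intro group_action.intro group_hom.intro group_hom_axioms.intro gQ group_BijGroup hom)
  have orb: "orbit QG \<phi> x = (\<lambda>q. act q x) ` Q" if "x \<in> X" for x
    unfolding orbit_def QG_def \<phi>_def using that by auto
  have orbcard: "\<exists>m. card ((\<lambda>q. act q x) ` Q) = p ^ m" if "x \<in> X" for x
  proof -
    have "card (orbit QG \<phi> x) * card (stabilizer QG \<phi> x) = Coset.order QG"
      by (rule ga.orbit_stabilizer_theorem[OF that])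
    hence "card (orbit QG \<phi> x) dvd card Q" unfolding Coset.order_def QG_def
      by (metis dvd_triv_left partial_object.select_convs(1) partial_object.surjective partial_object.update_convs(1))
    hence "card ((\<lambda>q. act q x) ` Q) dvd p ^ n" using orb[OF that] cQ by simp
    thus ?thesis using p by (auto simp: divides_primepow_nat)
  qed
  define Fx where "Fx = {x\<in>X. \<forall>q\<in>Q. act q x = x}"
  have key: "\<And>Y. Y \<subseteq> X - Fx \<Longrightarrow> (\<forall>q\<in>Q. \<forall>y\<in>Y. act q y \<in> Y) \<Longrightarrow> (\<Sum>y\<in>Y. f y) = 0"
  proof -
    fix Y :: "'x set"
    show "Y \<subseteq> X - Fx \<Longrightarrow> (\<forall>q\<in>Q. \<forall>y\<in>Y. act q y \<in> Y) \<Longrightarrow> (\<Sum>y\<in>Y. f y) = 0"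
    proof (induction "card Y" arbitrary: Y rule: less_induct)
      case (less Y)
      show ?case
      proof (cases "Y = {}")
        case False
        then obtain y where y: "y \<in> Y" by blast
        have yX: "y \<in> X" using less.prems y by auto
        define Ob where "Ob = (\<lambda>q. act q y) ` Q"
        have OY: "Ob \<subseteq> Y" using less.prems(2) y by (auto simp: Ob_def)
        have finY: "finite Y" using less.prems(1) X finite_subset by auto
        have finO: "finite Ob" using OY finY finite_subset by auto
        have fO: "(\<Sum>z\<in>Ob. f z) = of_nat (card Ob) * f y"
        proof -
          have "(\<Sum>z\<in>Ob. f z) = (\<Sum>z\<in>Ob. f y)"
            by (rule sum.cong[OF refl]) (use inv yX in \<open>auto simp: Ob_def\<close>)
          thus ?thesis by simp
        qed
        obtain m where m: "card Ob = p ^ m" using orbcard[OF yX] Ob_def by auto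
        have "y \<notin> Fx" using less.prems(1) y by auto
        then obtain q where q: "q \<in> Q" "act q y \<noteq> y" using yX by (auto simp: Fx_def)
        have one_Q: "\<one> \<in> Q" by (rule subgroup.one_closed[OF Q])
        have "y \<in> Ob" unfolding Ob_def by (rule image_eqI[OF _ one_Q]) (simp add: one[OF yX])
        moreover have "act q y \<in> Ob" using q Ob_def by auto
        ultimately have "card Ob \<noteq> 1" using q(2) by (auto simp: card_1_singleton_iff)
        hence "m > 0" using m by (cases m) auto
        hence O0: "(\<Sum>z\<in>Ob. f z) = 0" using fO m char_pow_zero[OF p ch] by simp
        have "Y - Ob \<subset> Y" using \<open>y \<in> Ob\<close> y by auto
        hence YO: "card (Y - Ob) < card Y" using finY by (rule psubset_card_mono[rotated])
        have inv2: "\<forall>r\<in>Q. \<forall>z\<in>Y - Ob. act r z \<in> Y - Ob"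
        proof (intro ballI)
          fix r z assume r: "r \<in> Q" and z: "z \<in> Y - Ob"
          have zX: "z \<in> X" using z less.prems(1) by auto
          have "act r z \<notin> Ob"
          proof
            assume "act r z \<in> Ob"
            then obtain s where s: "s \<in> Q" "act r z = act s y" by (auto simp: Ob_def)
            have "z = act (inv r) (act s y)" using actinv[OF r zX] s by simp
            also have "\<dots> = act (inv r \<otimes> s) y" using comp[OF invQ[OF r] s(1) yX] by simp
            finally have zz: "z = act (inv r \<otimes> s) y" .
            have "inv r \<otimes> s \<in> Q" by (rule subgroup.m_closed[OF Q invQ[OF r] s(1)])
            hence "z \<in> Ob" unfolding Ob_def using zz by (rule rev_image_eqI)
            thus False using z by simp
          qed
          thus "act r z \<in> Y - Ob" using less.prems(2) r z by auto
        qed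
        have "(\<Sum>z\<in>Y - Ob. f z) = 0" using less.hyps[OF YO] less.prems(1) inv2 by auto
        moreover have "(\<Sum>z\<in>Y. f z) = (\<Sum>z\<in>Ob. f z) + (\<Sum>z\<in>Y - Ob. f z)"
          using sum.subset_diff[OF OY finY, of f] by (simp add: add.commute)
        ultimately show ?thesis using O0 by simp
      qed simp
    qed
  qed
  have "(\<Sum>x\<in>X - Fx. f x) = 0"
  proof (rule key)
    show "\<forall>q\<in>Q. \<forall>y\<in>X - Fx. act q y \<in> X - Fx"
    proof (intro ballI)
      fix q y assume q: "q \<in> Q" and y: "y \<in> X - Fx"
      have "act q y \<notin> Fx"
      proof
        assume a: "act q y \<in> Fx"
        hence "act (inv q) (act q y) = act q y" using invQ[OF q] by (auto simp: Fx_def)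
        hence "y = act q y" using actinv q y by auto
        hence "y \<in> Fx" using a by simp
        thus False using y by simp
      qed
      thus "act q y \<in> X - Fx" using cl q y by auto
    qed
  qed simp
  moreover have "Fx \<subseteq> X" by (auto simp: Fx_def)
  hence "(\<Sum>x\<in>X. f x) = (\<Sum>x\<in>Fx. f x) + (\<Sum>x\<in>X - Fx. f x)"
    using sum.subset_diff[of Fx X f] X by (simp add: add.commute)
  ultimately show ?thesis by (simp add: Fx_def)
qed




locale fgrp = group H for H :: "'g monoid" (structure) +
  assumes finH: "finite (carrier H)"
begin

lemma sum_lmult:
  assumes "y \<in> carrier H"
  shows "(\<Sum>w\<in>carrier H. f (y \<otimes> w)) = (\<Sum>z\<in>carrier H. f z)"
  by (rule sum.reindex_bij_witness[where i="\<lambda>z. inv y \<otimes> z" and j="\<lambda>w. y \<otimes> w"])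
     (use assms in \<open>auto simp: m_assoc[symmetric]\<close>)

lemma sum_rmult:
  assumes "y \<in> carrier H"
  shows "(\<Sum>w\<in>carrier H. f (w \<otimes> y)) = (\<Sum>z\<in>carrier H. f z)"
  by (rule sum.reindex_bij_witness[where i="\<lambda>z. z \<otimes> inv y" and j="\<lambda>w. w \<otimes> y"])
     (use assms in \<open>auto simp: m_assoc\<close>)

lemma sum_inv:
  shows "(\<Sum>w\<in>carrier H. f (inv w)) = (\<Sum>z\<in>carrier H. f z)"
  by (rule sum.reindex_bij_witness[where i="\<lambda>z. inv z" and j="\<lambda>w. inv w"]) auto

lemma mult_out: "x \<notin> carrier H \<Longrightarrow> ga_mult H a b x = 0"
  by (simp add: ga_mult_def)

lemma mult_in: "x \<in> carrier H \<Longrightarrow> ga_mult H a b x = (\<Sum>y\<in>carrier H. a y * b (inv y \<otimes> x))"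
  by (simp add: ga_mult_def)

lemma mult_assoc: "ga_mult H (ga_mult H a b) c = ga_mult H a (ga_mult H b c)"
proof (rule ext)
  fix x
  show "ga_mult H (ga_mult H a b) c x = ga_mult H a (ga_mult H b c) x"
  proof (cases "x \<in> carrier H")
    case False thus ?thesis by (simp add: mult_out)
  next
    case True
    have "ga_mult H (ga_mult H a b) c x = (\<Sum>z\<in>carrier H. (\<Sum>y\<in>carrier H. a y * b (inv y \<otimes> z)) * c (inv z \<otimes> x))"
      using True by (simp add: mult_in)
    also have "\<dots> = (\<Sum>y\<in>carrier H. a y * (\<Sum>z\<in>carrier H. b (inv y \<otimes> z) * c (inv z \<otimes> x)))"
      unfolding sum_distrib_left sum_distrib_right mult.assoc by (rule sum.swap)
    also have "\<dots> = (\<Sum>y\<in>carrier H. a y * (\<Sum>w\<in>carrier H. b w * c (inv w \<otimes> (inv y \<otimes> x))))"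
    proof (rule sum.cong[OF refl])
      fix y assume y: "y \<in> carrier H"
      have "(\<Sum>z\<in>carrier H. b (inv y \<otimes> z) * c (inv z \<otimes> x)) =
            (\<Sum>w\<in>carrier H. b (inv y \<otimes> (y \<otimes> w)) * c (inv (y \<otimes> w) \<otimes> x))"
        using sum_lmult[OF y, of "\<lambda>z. b (inv y \<otimes> z) * c (inv z \<otimes> x)"] by simp
      also have "\<dots> = (\<Sum>w\<in>carrier H. b w * c (inv w \<otimes> (inv y \<otimes> x)))"
        by (rule sum.cong[OF refl]) (use y True in \<open>simp add: m_assoc[symmetric] inv_mult_group\<close>)
      finally show "a y * (\<Sum>z\<in>carrier H. b (inv y \<otimes> z) * c (inv z \<otimes> x)) = a y * (\<Sum>w\<in>carrier H. b w * c (inv w \<otimes> (inv y \<otimes> x)))" by simp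
    qed
    also have "\<dots> = ga_mult H a (ga_mult H b c) x"
      using True by (simp add: mult_in)
    finally show ?thesis .
  qed
qed

lemma lc1[simp]: "x \<in> carrier H \<Longrightarrow> y \<in> carrier H \<Longrightarrow> x \<otimes> (inv x \<otimes> y) = y"
  by (simp add: m_assoc[symmetric])
lemma lc2[simp]: "x \<in> carrier H \<Longrightarrow> y \<in> carrier H \<Longrightarrow> inv x \<otimes> (x \<otimes> y) = y"
  by (simp add: m_assoc[symmetric])

lemma sum_conj:
  assumes "h \<in> carrier H"
  shows "(\<Sum>w\<in>carrier H. f (h \<otimes> w \<otimes> inv h)) = (\<Sum>z\<in>carrier H. f z)"
  by (rule sum.reindex_bij_witness[where i="\<lambda>z. inv h \<otimes> z \<otimes> h" and j="\<lambda>w. h \<otimes> w \<otimes> inv h"])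
     (use assms in \<open>auto simp: m_assoc\<close>)

lemma sum_xinv:
  assumes "x \<in> carrier H"
  shows "(\<Sum>y\<in>carrier H. f (x \<otimes> inv y)) = (\<Sum>z\<in>carrier H. f z)"
  by (rule sum.reindex_bij_witness[where i="\<lambda>z. inv z \<otimes> x" and j="\<lambda>y. x \<otimes> inv y"])
     (use assms in \<open>auto simp: m_assoc inv_mult_group\<close>)

lemma grp_alg_iff: "a \<in> grp_alg H A \<longleftrightarrow> (\<forall>x. x \<notin> A \<longrightarrow> a x = 0)"
  by (simp add: grp_alg_def)

lemma grp_alg_mono: "A \<subseteq> B \<Longrightarrow> a \<in> grp_alg H A \<Longrightarrow> a \<in> grp_alg H B"
  by (auto simp: grp_alg_def)

lemma mult_in_F: "ga_mult H a b \<in> grp_alg H (carrier H)"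
  by (simp add: grp_alg_def ga_mult_def)

lemma mult_closed:
  assumes "subgroup A H" "a \<in> grp_alg H A" "b \<in> grp_alg H A"
  shows "ga_mult H a b \<in> grp_alg H A"
  unfolding grp_alg_iff
proof (intro allI impI)
  fix x assume x: "x \<notin> A"
  show "ga_mult H a b x = 0"
  proof (cases "x \<in> carrier H")
    case False thus ?thesis by (simp add: mult_out)
  next
    case True
    have "a y * b (inv y \<otimes> x) = 0" if y: "y \<in> carrier H" for y
    proof (cases "y \<in> A")
      case False thus ?thesis using assms(2) by (simp add: grp_alg_iff)
    next
      case yA: True
      have "inv y \<otimes> x \<notin> A"
      proof
        assume h: "inv y \<otimes> x \<in> A"
        have "y \<otimes> (inv y \<otimes> x) \<in> A" by (rule subgroup.m_closed[OF assms(1) yA h])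
        moreover have "y \<otimes> (inv y \<otimes> x) = x" using y True by (rule lc1)
        ultimately show False using x by simp
      qed
      thus ?thesis using assms(3) by (simp add: grp_alg_iff)
    qed
    hence "(\<Sum>y\<in>carrier H. a y * b (inv y \<otimes> x)) = 0" by (intro sum.neutral) auto
    thus ?thesis using True by (simp add: mult_in)
  qed
qed

lemma mult_zero_l[simp]: "ga_mult H (\<lambda>_. 0) a = (\<lambda>_. 0)"
  by (rule ext) (simp add: ga_mult_def)
lemma mult_zero_r[simp]: "ga_mult H a (\<lambda>_. 0) = (\<lambda>_. 0)"
  by (rule ext) (simp add: ga_mult_def)

lemma mult_add_l: "ga_mult H (ga_add a b) c = ga_add (ga_mult H a c) (ga_mult H b c)"
  by (rule ext) (simp add: ga_mult_def ga_add_def distrib_right sum.distrib)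
lemma mult_add_r: "ga_mult H c (ga_add a b) = ga_add (ga_mult H c a) (ga_mult H c b)"
  by (rule ext) (simp add: ga_mult_def ga_add_def distrib_left sum.distrib)
lemma mult_sub_l: "ga_mult H (\<lambda>x. a x - b x) c = (\<lambda>x. ga_mult H a c x - ga_mult H b c x)"
  by (rule ext) (simp add: ga_mult_def left_diff_distrib sum_subtractf)
lemma mult_sub_r: "ga_mult H c (\<lambda>x. a x - b x) = (\<lambda>x. ga_mult H c a x - ga_mult H c b x)"
  by (rule ext) (simp add: ga_mult_def right_diff_distrib sum_subtractf)
lemma mult_scale_l: "ga_mult H (\<lambda>x. k * a x) c = (\<lambda>x. k * ga_mult H a c x)"
  by (rule ext) (simp add: ga_mult_def sum_distrib_left mult.assoc)
lemma mult_scale_r: "ga_mult H c (\<lambda>x. k * a x) = (\<lambda>x. k * ga_mult H c a x)"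
  by (rule ext) (simp add: ga_mult_def sum_distrib_left mult.assoc mult.left_commute)
lemma mult_sum_l: "ga_mult H (\<lambda>x. \<Sum>i\<in>S. f i x) c = (\<lambda>x. \<Sum>i\<in>S. ga_mult H (f i) c x)"
proof (rule ext)
  fix x
  have "(\<Sum>y\<in>carrier H. (\<Sum>i\<in>S. f i y) * c (inv y \<otimes> x)) = (\<Sum>i\<in>S. \<Sum>y\<in>carrier H. f i y * c (inv y \<otimes> x))"
    unfolding sum_distrib_right by (rule sum.swap)
  thus "ga_mult H (\<lambda>x. \<Sum>i\<in>S. f i x) c x = (\<Sum>i\<in>S. ga_mult H (f i) c x)"
    by (cases "x \<in> carrier H") (simp_all add: ga_mult_def)
qed
lemma mult_sum_r: "ga_mult H c (\<lambda>x. \<Sum>i\<in>S. f i x) = (\<lambda>x. \<Sum>i\<in>S. ga_mult H c (f i) x)"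
proof (rule ext)
  fix x
  have "(\<Sum>y\<in>carrier H. c y * (\<Sum>i\<in>S. f i (inv y \<otimes> x))) = (\<Sum>i\<in>S. \<Sum>y\<in>carrier H. c y * f i (inv y \<otimes> x))"
    unfolding sum_distrib_left by (rule sum.swap)
  thus "ga_mult H c (\<lambda>x. \<Sum>i\<in>S. f i x) x = (\<Sum>i\<in>S. ga_mult H c (f i) x)"
    by (cases "x \<in> carrier H") (simp_all add: ga_mult_def)
qed

definition dl :: "'g \<Rightarrow> 'g \<Rightarrow> 'k::field" where "dl g = (\<lambda>x. if x = g then 1 else 0)"

lemma dl_in: "g \<in> A \<Longrightarrow> dl g \<in> grp_alg H A"
  by (simp add: dl_def grp_alg_def)

lemma mult_dl_l:
  assumes "g \<in> carrier H"
  shows "ga_mult H (dl g) a = (\<lambda>x. if x \<in> carrier H then a (inv g \<otimes> x) else 0)"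
proof (rule ext)
  fix x
  have "(\<Sum>y\<in>carrier H. dl g y * a (inv y \<otimes> x)) = (\<Sum>y\<in>carrier H. if y = g then a (inv g \<otimes> x) else 0)"
    by (rule sum.cong[OF refl]) (simp add: dl_def)
  also have "\<dots> = a (inv g \<otimes> x)" using assms by (simp add: sum.delta finH)
  finally show "ga_mult H (dl g) a x = (if x \<in> carrier H then a (inv g \<otimes> x) else 0)"
    by (simp add: ga_mult_def)
qed

lemma mult_dl_r:
  assumes "g \<in> carrier H"
  shows "ga_mult H a (dl g) = (\<lambda>x. if x \<in> carrier H then a (x \<otimes> inv g) else 0)"
proof (rule ext)
  fix x
  show "ga_mult H a (dl g) x = (if x \<in> carrier H then a (x \<otimes> inv g) else 0)"
  proof (cases "x \<in> carrier H")
    case True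
    have "(\<Sum>y\<in>carrier H. a y * dl g (inv y \<otimes> x)) = (\<Sum>y\<in>carrier H. if y = x \<otimes> inv g then a y else 0)"
    proof (rule sum.cong[OF refl])
      fix y assume y: "y \<in> carrier H"
      have "(inv y \<otimes> x = g) \<longleftrightarrow> (y = x \<otimes> inv g)"
      proof
        assume "inv y \<otimes> x = g" thus "y = x \<otimes> inv g" using y True assms
          by (metis inv_equality inv_inv inv_closed m_closed m_assoc r_inv r_one)
      next
        assume "y = x \<otimes> inv g" thus "inv y \<otimes> x = g" using y True assms
          by (simp add: inv_mult_group m_assoc)
      qed
      thus "a y * dl g (inv y \<otimes> x) = (if y = x \<otimes> inv g then a y else 0)" by (simp add: dl_def)
    qed
    also have "\<dots> = a (x \<otimes> inv g)" using True assms by (simp add: sum.delta finH)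
    finally show ?thesis using True by (simp add: mult_in)
  qed (simp add: mult_out)
qed

lemma dl_one_l: "a \<in> grp_alg H (carrier H) \<Longrightarrow> ga_mult H (dl \<one>) a = a"
  by (rule ext) (simp add: mult_dl_l grp_alg_iff)
lemma dl_one_r: "a \<in> grp_alg H (carrier H) \<Longrightarrow> ga_mult H a (dl \<one>) = a"
  by (rule ext) (simp add: mult_dl_r grp_alg_iff)

lemma conj_mult:
  assumes h: "h \<in> carrier H"
  shows "ga_conj H h (ga_mult H a b) = ga_mult H (ga_conj H h a) (ga_conj H h b)"
proof (rule ext)
  fix x
  show "ga_conj H h (ga_mult H a b) x = ga_mult H (ga_conj H h a) (ga_conj H h b) x"
  proof (cases "x \<in> carrier H")
    case True
    have "ga_mult H (ga_conj H h a) (ga_conj H h b) x =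
       (\<Sum>y\<in>carrier H. a (inv h \<otimes> y \<otimes> h) * b (inv h \<otimes> (inv y \<otimes> x) \<otimes> h))"
      using True h by (simp add: mult_in ga_conj_def)
    also have "\<dots> = (\<Sum>w\<in>carrier H. a (inv h \<otimes> (h \<otimes> w \<otimes> inv h) \<otimes> h) * b (inv h \<otimes> (inv (h \<otimes> w \<otimes> inv h) \<otimes> x) \<otimes> h))"
      using sum_conj[OF h, of "\<lambda>y. a (inv h \<otimes> y \<otimes> h) * b (inv h \<otimes> (inv y \<otimes> x) \<otimes> h)"] by simp
    also have "\<dots> = (\<Sum>w\<in>carrier H. a w * b (inv w \<otimes> (inv h \<otimes> x \<otimes> h)))"
      by (rule sum.cong[OF refl]) (use h True in \<open>simp add: m_assoc inv_mult_group\<close>)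
    also have "\<dots> = ga_conj H h (ga_mult H a b) x"
      using True h by (simp add: mult_in ga_conj_def)
    finally show ?thesis by simp
  qed (simp add: ga_conj_def mult_out)
qed

lemma conj_conj:
  assumes "h \<in> carrier H" "k \<in> carrier H"
  shows "ga_conj H h (ga_conj H k a) = ga_conj H (h \<otimes> k) a"
  using assms by (intro ext) (simp add: ga_conj_def m_assoc inv_mult_group)

lemma conj_one: "a \<in> grp_alg H (carrier H) \<Longrightarrow> ga_conj H \<one> a = a"
  by (intro ext) (simp add: ga_conj_def grp_alg_iff)

lemma conj_inv: "h \<in> carrier H \<Longrightarrow> a \<in> grp_alg H (carrier H) \<Longrightarrow> ga_conj H (inv h) (ga_conj H h a) = a"
  by (simp add: conj_conj conj_one)

lemma conj_inv2: "h \<in> carrier H \<Longrightarrow> a \<in> grp_alg H (carrier H) \<Longrightarrow> ga_conj H h (ga_conj H (inv h) a) = a"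
  by (simp add: conj_conj conj_one)

lemma conj_zero[simp]: "ga_conj H h (\<lambda>_. 0) = (\<lambda>_. 0)"
  by (rule ext) (simp add: ga_conj_def)
lemma conj_add: "ga_conj H h (ga_add a b) = ga_add (ga_conj H h a) (ga_conj H h b)"
  by (rule ext) (simp add: ga_conj_def ga_add_def)
lemma conj_F: "ga_conj H h a \<in> grp_alg H (carrier H)"
  by (simp add: ga_conj_def grp_alg_def)

lemma conj_supp:
  assumes "h \<in> carrier H" "a \<in> grp_alg H A"
    and "\<And>x. x \<in> carrier H \<Longrightarrow> inv h \<otimes> x \<otimes> h \<in> A \<Longrightarrow> x \<in> A"
  shows "ga_conj H h a \<in> grp_alg H A"
  using assms by (auto simp: grp_alg_iff ga_conj_def)

lemma conj_zero_iff:
  assumes "h \<in> carrier H" "a \<in> grp_alg H (carrier H)"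
  shows "ga_conj H h a = (\<lambda>_. 0) \<longleftrightarrow> a = (\<lambda>_. 0)"
  using conj_inv[OF assms] by (metis conj_zero)

lemma dl_conj_comm:
  assumes "g \<in> carrier H"
  shows "ga_mult H (dl g) a = ga_mult H (ga_conj H g a) (dl g)"
  using assms by (intro ext) (simp add: mult_dl_l mult_dl_r ga_conj_def m_assoc)

lemma center_conj:
  assumes "A \<subseteq> carrier H" "z \<in> ga_center H A" "y \<in> A"
  shows "ga_conj H y z = z"
proof (rule ext)
  fix x
  have zA: "z \<in> grp_alg H A" and cm: "ga_mult H z (dl y) = ga_mult H (dl y) z"
    using assms dl_in[OF assms(3)] by (auto simp: ga_center_def)
  have y: "y \<in> carrier H" using assms by auto
  show "ga_conj H y z x = z x"
  proof (cases "x \<in> carrier H")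
    case True
    have "ga_mult H z (dl y) (x \<otimes> y) = ga_mult H (dl y) z (x \<otimes> y)" using cm by simp
    thus ?thesis using True y by (simp add: mult_dl_l mult_dl_r ga_conj_def m_assoc)
  next
    case False thus ?thesis using zA assms(1) by (auto simp: ga_conj_def grp_alg_iff)
  qed
qed

lemma commute_conj:
  assumes "\<And>y. a y \<noteq> 0 \<Longrightarrow> y \<in> carrier H \<and> ga_conj H y z = z"
  shows "ga_mult H a z = ga_mult H z a"
proof (rule ext)
  fix x
  show "ga_mult H a z x = ga_mult H z a x"
  proof (cases "x \<in> carrier H")
    case True
    have "ga_mult H a z x = (\<Sum>y\<in>carrier H. a y * z (x \<otimes> inv y))"
    proof -
      have eq: "a y * z (inv y \<otimes> x) = a y * z (x \<otimes> inv y)" if y: "y \<in> carrier H" for y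
      proof (cases "a y = 0")
        case False
        hence "ga_conj H y z (x \<otimes> inv y) = z (x \<otimes> inv y)" using assms by simp
        thus ?thesis using y True by (simp add: ga_conj_def m_assoc)
      qed simp
      have "(\<Sum>y\<in>carrier H. a y * z (inv y \<otimes> x)) = (\<Sum>y\<in>carrier H. a y * z (x \<otimes> inv y))"
        by (rule sum.cong[OF refl]) (rule eq)
      thus ?thesis using True by (simp add: mult_in)
    qed
    also have "\<dots> = (\<Sum>y\<in>carrier H. z (x \<otimes> inv y) * a (inv (x \<otimes> inv y) \<otimes> x))"
      by (rule sum.cong[OF refl]) (use True in \<open>simp add: inv_mult_group m_assoc mult.commute\<close>)
    also have "\<dots> = (\<Sum>w\<in>carrier H. z w * a (inv w \<otimes> x))"
      using sum_xinv[OF True, of "\<lambda>w. z w * a (inv w \<otimes> x)"] by simp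
    finally show ?thesis using True by (simp add: mult_in)
  qed (simp add: mult_out)
qed

lemma center_intro:
  fixes z :: "'g \<Rightarrow> 'k::field"
  assumes "A \<subseteq> carrier H" "z \<in> grp_alg H A" "\<And>y. y \<in> A \<Longrightarrow> ga_conj H y z = z"
  shows "z \<in> ga_center H A"
  unfolding ga_center_def
proof (safe intro!: assms(2))
  fix a :: "'g \<Rightarrow> 'k" assume "a \<in> grp_alg H A"
  hence "\<And>y. a y \<noteq> 0 \<Longrightarrow> y \<in> carrier H \<and> ga_conj H y z = z"
    using assms by (auto simp: grp_alg_iff)
  from commute_conj[OF this] show "ga_mult H z a = ga_mult H a z" by simp
qed


end



context fgrp begin

lemma conj_sub: "ga_conj H h (\<lambda>x. a x - b x) = (\<lambda>x. ga_conj H h a x - ga_conj H h b x)"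
  by (rule ext) (simp add: ga_conj_def)

lemma center_sub_grp: "z \<in> ga_center H A \<Longrightarrow> z \<in> grp_alg H A"
  by (simp add: ga_center_def)

lemma center_comm: "z \<in> ga_center H A \<Longrightarrow> a \<in> grp_alg H A \<Longrightarrow> ga_mult H z a = ga_mult H a z"
  by (simp add: ga_center_def)

lemma center_mult:
  assumes A: "subgroup A H" and z: "z \<in> ga_center H A" and w: "w \<in> ga_center H A"
  shows "ga_mult H z w \<in> ga_center H A"
proof -
  have AF: "A \<subseteq> carrier H" by (rule subgroup.subset[OF A])
  show ?thesis
  proof (rule center_intro[OF AF])
    show "ga_mult H z w \<in> grp_alg H A"
      by (rule mult_closed[OF A center_sub_grp[OF z] center_sub_grp[OF w]])
    fix y assume y: "y \<in> A"
    hence "y \<in> carrier H" using AF by auto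
    thus "ga_conj H y (ga_mult H z w) = ga_mult H z w"
      by (simp add: conj_mult center_conj[OF AF z y] center_conj[OF AF w y])
  qed
qed

lemma center_diff:
  assumes A: "subgroup A H" and z: "z \<in> ga_center H A" and w: "w \<in> ga_center H A"
  shows "(\<lambda>x. z x - w x) \<in> ga_center H A"
proof -
  have AF: "A \<subseteq> carrier H" by (rule subgroup.subset[OF A])
  show ?thesis
  proof (rule center_intro[OF AF])
    show "(\<lambda>x. z x - w x) \<in> grp_alg H A"
      using center_sub_grp[OF z] center_sub_grp[OF w] by (simp add: grp_alg_iff)
    fix y assume y: "y \<in> A"
    thus "ga_conj H y (\<lambda>x. z x - w x) = (\<lambda>x. z x - w x)"
      by (simp add: conj_sub center_conj[OF AF z y] center_conj[OF AF w y])
  qed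
qed

lemma block_dich:
  assumes A: "subgroup A H" and e: "is_block H A e" and f: "f \<in> ga_center H A" and fi: "ga_idem H f"
  shows "ga_mult H e f = (\<lambda>_. 0) \<or> ga_mult H e f = e"
proof -
  have eZ: "e \<in> ga_center H A" and ei: "ga_mult H e e = e"
    and pr: "\<And>e1 e2. e1 \<in> ga_center H A \<Longrightarrow> e2 \<in> ga_center H A \<Longrightarrow> ga_idem H e1 \<Longrightarrow> ga_idem H e2
       \<Longrightarrow> ga_mult H e1 e2 = (\<lambda>_. 0) \<Longrightarrow> ga_mult H e2 e1 = (\<lambda>_. 0) \<Longrightarrow> e = ga_add e1 e2
       \<Longrightarrow> e1 = (\<lambda>_. 0) \<or> e2 = (\<lambda>_. 0)"
    using e unfolding is_block_def prim_idem_def ga_idem_def by blast+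
  have ff: "ga_mult H f f = f" using fi by (simp add: ga_idem_def)
  have fe: "ga_mult H f e = ga_mult H e f" using center_comm[OF f center_sub_grp[OF eZ]] .
  define e1 where "e1 = ga_mult H e f"
  define e2 where "e2 = (\<lambda>x. e x - e1 x)"
  have e1Z: "e1 \<in> ga_center H A" unfolding e1_def by (rule center_mult[OF A eZ f])
  have e2Z: "e2 \<in> ga_center H A" unfolding e2_def by (rule center_diff[OF A eZ e1Z])
  have ee1: "ga_mult H e e1 = e1" unfolding e1_def by (simp add: mult_assoc[symmetric] ei)
  have e1e: "ga_mult H e1 e = e1" unfolding e1_def mult_assoc fe by (simp add: mult_assoc[symmetric] ei)
  have e1e1: "ga_mult H e1 e1 = e1"
  proof -
    have "ga_mult H e1 e1 = ga_mult H (ga_mult H e1 e) f" unfolding e1_def[of] by (simp add: e1_def mult_assoc)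
    also have "\<dots> = ga_mult H e (ga_mult H f f)" by (simp only: e1e) (simp add: e1_def mult_assoc)
    finally show ?thesis by (simp add: ff e1_def)
  qed
  have e1e2: "ga_mult H e1 e2 = (\<lambda>_. 0)" unfolding e2_def by (simp add: mult_sub_r e1e e1e1)
  have e2e1: "ga_mult H e2 e1 = (\<lambda>_. 0)" unfolding e2_def by (simp add: mult_sub_l ee1 e1e1)
  have sr: "\<And>a. ga_mult H a e2 = (\<lambda>x. ga_mult H a e x - ga_mult H a e1 x)"
    unfolding e2_def by (rule mult_sub_r)
  have e2e: "ga_mult H e2 e = e2" unfolding e2_def by (simp add: mult_sub_l ei e1e)
  have e2e2: "ga_mult H e2 e2 = e2" by (simp only: sr e2e e2e1) simp
  have "e = ga_add e1 e2" by (simp add: ga_add_def e2_def)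
  hence "e1 = (\<lambda>_. 0) \<or> e2 = (\<lambda>_. 0)"
    using pr[OF e1Z e2Z] e1e1 e2e2 e1e2 e2e1 by (simp add: ga_idem_def)
  moreover have "e1 = e" if "e2 = (\<lambda>_. 0)"
  proof (rule ext)
    fix x have "e2 x = 0" using that by simp
    thus "e1 x = e x" unfolding e2_def by simp
  qed
  ultimately show ?thesis unfolding e1_def by auto
qed

lemma block_props:
  assumes "is_block H A e"
  shows "e \<in> ga_center H A" "e \<noteq> (\<lambda>_. 0)" "ga_mult H e e = e" "ga_idem H e"
  using assms by (auto simp: is_block_def prim_idem_def ga_idem_def)

lemma block_orth:
  assumes A: "subgroup A H" and e: "is_block H A e" and f: "is_block H A f"
  shows "ga_mult H e f = (\<lambda>_. 0) \<or> e = f"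
proof -
  have d1: "ga_mult H e f = (\<lambda>_. 0) \<or> ga_mult H e f = e"
    by (rule block_dich[OF A e block_props(1,4)[OF f]])
  have d2: "ga_mult H f e = (\<lambda>_. 0) \<or> ga_mult H f e = f"
    by (rule block_dich[OF A f block_props(1,4)[OF e]])
  have c: "ga_mult H e f = ga_mult H f e"
    using center_comm[OF block_props(1)[OF e] center_sub_grp[OF block_props(1)[OF f]]] .
  show ?thesis
  proof (cases "ga_mult H e f = (\<lambda>_. 0)")
    case False
    hence "ga_mult H e f = e" "ga_mult H f e = f" using d1 d2 c by auto
    thus ?thesis using c by simp
  qed simp
qed

definition ncond :: "'g set \<Rightarrow> 'g \<Rightarrow> bool" where
  "ncond A h \<longleftrightarrow> h \<in> carrier H \<and> (\<forall>x\<in>A. h \<otimes> x \<otimes> inv h \<in> A) \<and> (\<forall>x\<in>A. inv h \<otimes> x \<otimes> h \<in> A)"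

lemma ncond_inv: "ncond A h \<Longrightarrow> ncond A (inv h)"
  by (auto simp: ncond_def)

lemma conj_grp_alg:
  assumes A: "A \<subseteq> carrier H" and n: "ncond A h" and a: "a \<in> grp_alg H A"
  shows "ga_conj H h a \<in> grp_alg H A"
proof (rule conj_supp)
  show h: "h \<in> carrier H" using n by (simp add: ncond_def)
  show "a \<in> grp_alg H A" by fact
  fix x assume x: "x \<in> carrier H" "inv h \<otimes> x \<otimes> h \<in> A"
  hence "h \<otimes> (inv h \<otimes> x \<otimes> h) \<otimes> inv h \<in> A" using n by (simp add: ncond_def)
  thus "x \<in> A" using x h by (simp add: m_assoc)
qed

lemma conj_center:
  assumes A: "subgroup A H" and n: "ncond A h" and z: "z \<in> ga_center H A"
  shows "ga_conj H h z \<in> ga_center H A"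
proof -
  have AF: "A \<subseteq> carrier H" by (rule subgroup.subset[OF A])
  have h: "h \<in> carrier H" using n by (simp add: ncond_def)
  show ?thesis
  proof (rule center_intro[OF AF])
    show "ga_conj H h z \<in> grp_alg H A" by (rule conj_grp_alg[OF AF n center_sub_grp[OF z]])
    fix y assume y: "y \<in> A"
    have yF: "y \<in> carrier H" using y AF by auto
    have y': "inv h \<otimes> y \<otimes> h \<in> A" using n y by (simp add: ncond_def)
    have "ga_conj H y (ga_conj H h z) = ga_conj H (y \<otimes> h) z" by (rule conj_conj[OF yF h])
    also have "y \<otimes> h = h \<otimes> (inv h \<otimes> y \<otimes> h)" using h yF by (simp add: m_assoc)
    also have "ga_conj H (h \<otimes> (inv h \<otimes> y \<otimes> h)) z = ga_conj H h (ga_conj H (inv h \<otimes> y \<otimes> h) z)"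
      using h yF by (simp add: conj_conj)
    also have "ga_conj H (inv h \<otimes> y \<otimes> h) z = z" by (rule center_conj[OF AF z y'])
    finally show "ga_conj H y (ga_conj H h z) = ga_conj H h z" .
  qed
qed

lemma conj_block:
  assumes A: "subgroup A H" and n: "ncond A h" and e: "is_block H A e"
  shows "is_block H A (ga_conj H h e)"
proof -
  have AF: "A \<subseteq> carrier H" by (rule subgroup.subset[OF A])
  have h: "h \<in> carrier H" using n by (simp add: ncond_def)
  have hi: "inv h \<in> carrier H" using h by simp
  have eZ: "e \<in> ga_center H A" using e by (simp add: block_props)
  have eF: "e \<in> grp_alg H (carrier H)" using center_sub_grp[OF eZ] AF grp_alg_mono by blast
  have pr: "\<And>e1 e2. e1 \<in> ga_center H A \<Longrightarrow> e2 \<in> ga_center H A \<Longrightarrow> ga_idem H e1 \<Longrightarrow> ga_idem H e2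
       \<Longrightarrow> ga_mult H e1 e2 = (\<lambda>_. 0) \<Longrightarrow> ga_mult H e2 e1 = (\<lambda>_. 0) \<Longrightarrow> e = ga_add e1 e2
       \<Longrightarrow> e1 = (\<lambda>_. 0) \<or> e2 = (\<lambda>_. 0)"
    using e unfolding is_block_def prim_idem_def by blast
  show ?thesis unfolding is_block_def prim_idem_def
  proof (intro conjI ballI impI)
    show "ga_conj H h e \<in> ga_center H A" by (rule conj_center[OF A n eZ])
    show "ga_conj H h e \<noteq> (\<lambda>_. 0)" using conj_zero_iff[OF h eF] block_props(2)[OF e] by simp
    show "ga_idem H (ga_conj H h e)" using block_props(3)[OF e] by (simp add: ga_idem_def conj_mult[OF h, symmetric])
    fix e1 e2 assume e1: "e1 \<in> ga_center H A" and e2: "e2 \<in> ga_center H A"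
      and hyp: "ga_idem H e1 \<and> ga_idem H e2 \<and> ga_mult H e1 e2 = (\<lambda>_. 0) \<and> ga_mult H e2 e1 = (\<lambda>_. 0) \<and> ga_conj H h e = ga_add e1 e2"
    have e1F: "e1 \<in> grp_alg H (carrier H)" using center_sub_grp[OF e1] AF grp_alg_mono by blast
    have e2F: "e2 \<in> grp_alg H (carrier H)" using center_sub_grp[OF e2] AF grp_alg_mono by blast
    have "ga_conj H (inv h) e1 = (\<lambda>_. 0) \<or> ga_conj H (inv h) e2 = (\<lambda>_. 0)"
    proof (rule pr)
      show "ga_conj H (inv h) e1 \<in> ga_center H A" by (rule conj_center[OF A ncond_inv[OF n] e1])
      show "ga_conj H (inv h) e2 \<in> ga_center H A" by (rule conj_center[OF A ncond_inv[OF n] e2])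
      show "ga_idem H (ga_conj H (inv h) e1)" using hyp by (simp add: ga_idem_def conj_mult[OF hi, symmetric])
      show "ga_idem H (ga_conj H (inv h) e2)" using hyp by (simp add: ga_idem_def conj_mult[OF hi, symmetric])
      show "ga_mult H (ga_conj H (inv h) e1) (ga_conj H (inv h) e2) = (\<lambda>_. 0)" using hyp by (simp add: conj_mult[OF hi, symmetric])
      show "ga_mult H (ga_conj H (inv h) e2) (ga_conj H (inv h) e1) = (\<lambda>_. 0)" using hyp by (simp add: conj_mult[OF hi, symmetric])
      have "e = ga_conj H (inv h) (ga_conj H h e)" using conj_inv[OF h eF] by simp
      thus "e = ga_add (ga_conj H (inv h) e1) (ga_conj H (inv h) e2)" using hyp by (simp add: conj_add)
    qed
    thus "e1 = (\<lambda>_. 0) \<or> e2 = (\<lambda>_. 0)" using conj_zero_iff[OF hi e1F] conj_zero_iff[OF hi e2F] by simp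
  qed
qed

end



locale mctx = fgrp H for H :: "'g monoid" (structure) +
  fixes G N :: "'g set" and p :: nat and b c bt :: "'g \<Rightarrow> 'k::field"
  assumes prime_p: "prime p" and charp: "CHAR('k) = p"
    and GH: "G \<lhd> H" and NH: "N \<lhd> H" and NG: "N \<subseteq> G"
    and bB: "is_block H G b" and bst: "\<forall>h\<in>carrier H. ga_conj H h b = b"
    and cB: "is_block H N c" and bc: "ga_mult H b c \<noteq> (\<lambda>_. 0)"
    and btB: "is_block H (inertia H G c) bt"
    and btc: "ga_mult H bt c \<noteq> (\<lambda>_. 0)"
    and btr: "b = ga_trace H G (inertia H G c) bt"
begin

abbreviation "I \<equiv> inertia H G c"
abbreviation "IH \<equiv> inertia H (carrier H) c"

lemma G_sub: "subgroup G H" using GH by (rule normal_imp_subgroup)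
lemma N_sub: "subgroup N H" using NH by (rule normal_imp_subgroup)
lemma GF: "G \<subseteq> carrier H" by (rule subgroup.subset[OF G_sub])
lemma NF: "N \<subseteq> carrier H" by (rule subgroup.subset[OF N_sub])

lemma G_ncond: "h \<in> carrier H \<Longrightarrow> ncond G h"
  unfolding ncond_def using normal.inv_op_closed1[OF GH] normal.inv_op_closed2[OF GH] by auto
lemma N_ncond: "h \<in> carrier H \<Longrightarrow> ncond N h"
  unfolding ncond_def using normal.inv_op_closed1[OF NH] normal.inv_op_closed2[OF NH] by auto

lemma cZ: "c \<in> ga_center H N" using cB by (simp add: block_props)
lemma c_N: "c \<in> grp_alg H N" using cZ by (rule center_sub_grp)
lemma c_F: "c \<in> grp_alg H (carrier H)" using c_N NF grp_alg_mono by blast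
lemma cc: "ga_mult H c c = c" using cB by (simp add: block_props)
lemma c_fix_N: "y \<in> N \<Longrightarrow> ga_conj H y c = c" using center_conj[OF NF cZ] by blast

lemma inertia_sub:
  assumes K: "subgroup K H"
  shows "subgroup (inertia H K c) H"
proof
  have KF: "K \<subseteq> carrier H" by (rule subgroup.subset[OF K])
  show "inertia H K c \<subseteq> carrier H" using KF by (auto simp: inertia_def)
  fix x y assume x: "x \<in> inertia H K c" and y: "y \<in> inertia H K c"
  hence xK: "x \<in> K" and yK: "y \<in> K" and xc: "ga_conj H x c = c" and yc: "ga_conj H y c = c"
    by (auto simp: inertia_def)
  have xF: "x \<in> carrier H" and yF: "y \<in> carrier H" using xK yK KF by auto
  have "x \<otimes> y \<in> K" by (rule subgroup.m_closed[OF K xK yK])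
  moreover have "ga_conj H (x \<otimes> y) c = c" using conj_conj[OF xF yF, of c] xc yc by simp
  ultimately show "x \<otimes> y \<in> inertia H K c" by (simp add: inertia_def)
next
  have "\<one> \<in> K" by (rule subgroup.one_closed[OF K])
  thus "\<one> \<in> inertia H K c" by (simp add: inertia_def conj_one[OF c_F])
next
  have KF: "K \<subseteq> carrier H" by (rule subgroup.subset[OF K])
  fix x assume x: "x \<in> inertia H K c"
  hence xK: "x \<in> K" and xc: "ga_conj H x c = c" by (auto simp: inertia_def)
  have xF: "x \<in> carrier H" using xK KF by auto
  have "inv x \<in> K" by (rule subgroup.m_inv_closed[OF K xK])
  moreover have "ga_conj H (inv x) c = c" using conj_inv[OF xF c_F] xc by simp
  ultimately show "inv x \<in> inertia H K c" by (simp add: inertia_def)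
qed

lemma F_sub: "subgroup (carrier H) H"
  by (rule subgroup_self)

lemma I_sub: "subgroup I H" by (rule inertia_sub[OF G_sub])
lemma IH_sub: "subgroup IH H" by (rule inertia_sub[OF F_sub])
lemma IF: "I \<subseteq> carrier H" by (rule subgroup.subset[OF I_sub])
lemma IG: "I \<subseteq> G" by (auto simp: inertia_def)
lemma I_IH: "I \<subseteq> IH" using GF by (auto simp: inertia_def)
lemma NI: "N \<subseteq> I" using NG c_fix_N by (auto simp: inertia_def)
lemma I_iff: "x \<in> G \<Longrightarrow> x \<in> I \<longleftrightarrow> ga_conj H x c = c" by (simp add: inertia_def)

lemma c_I: "c \<in> grp_alg H I" using c_N NI grp_alg_mono by blast
lemma cZI: "c \<in> ga_center H I"
  by (rule center_intro[OF IF c_I]) (simp add: inertia_def)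
lemma c_idem: "ga_idem H c" using cB by (simp add: block_props)

lemma btZ: "bt \<in> ga_center H I" using btB by (simp add: block_props)
lemma bt_I: "bt \<in> grp_alg H I" using btZ by (rule center_sub_grp)
lemma bt_G: "bt \<in> grp_alg H G" using bt_I IG grp_alg_mono by blast
lemma bt_F: "bt \<in> grp_alg H (carrier H)" using bt_I IF grp_alg_mono by blast
lemma btbt: "ga_mult H bt bt = bt" using btB by (simp add: block_props)
lemma bt_nz: "bt \<noteq> (\<lambda>_. 0)" using btB by (simp add: block_props)
lemma bt_fix_I: "y \<in> I \<Longrightarrow> ga_conj H y bt = bt" using center_conj[OF IF btZ] by blast

lemma bZ: "b \<in> ga_center H G" using bB by (simp add: block_props)
lemma b_G: "b \<in> grp_alg H G" using bZ by (rule center_sub_grp)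
lemma b_F: "b \<in> grp_alg H (carrier H)" using b_G GF grp_alg_mono by blast
lemma bb: "ga_mult H b b = b" using bB by (simp add: block_props)

lemma btc_eq: "ga_mult H bt c = bt"
  using block_dich[OF I_sub btB cZI c_idem] btc by simp
lemma cbt_eq: "ga_mult H c bt = bt"
  using center_comm[OF btZ c_I] btc_eq by simp

lemma conjc_block: "h \<in> carrier H \<Longrightarrow> is_block H N (ga_conj H h c)"
  by (rule conj_block[OF N_sub N_ncond cB])

lemma conjc_orth:
  assumes "x \<in> carrier H" "y \<in> carrier H" "ga_conj H x c \<noteq> ga_conj H y c"
  shows "ga_mult H (ga_conj H x c) (ga_conj H y c) = (\<lambda>_. 0)"
  using block_orth[OF N_sub conjc_block[OF assms(1)] conjc_block[OF assms(2)]] assms(3) by simp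

lemma conj_bt_c:
  assumes x: "x \<in> carrier H" and w: "w \<in> carrier H"
  shows "ga_mult H (ga_conj H x bt) (ga_conj H w c) =
    (if ga_conj H x c = ga_conj H w c then ga_conj H x bt else (\<lambda>_. 0))"
proof -
  have e: "ga_conj H x bt = ga_mult H (ga_conj H x bt) (ga_conj H x c)"
    using conj_mult[OF x, of bt c] btc_eq by simp
  have "ga_mult H (ga_conj H x bt) (ga_conj H w c) =
        ga_mult H (ga_conj H x bt) (ga_mult H (ga_conj H x c) (ga_conj H w c))"
    by (subst e) (simp add: mult_assoc)
  also have "\<dots> = (if ga_conj H x c = ga_conj H w c then ga_conj H x bt else (\<lambda>_. 0))"
  proof (cases "ga_conj H x c = ga_conj H w c")
    case True
    have "ga_mult H (ga_conj H x c) (ga_conj H x c) = ga_conj H x c"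
      using conj_mult[OF x, of c c] cc by simp
    thus ?thesis using True e by simp
  next
    case False thus ?thesis using conjc_orth[OF x w False] by simp
  qed
  finally show ?thesis .
qed

definition CS where "CS = {y <# I | y. y \<in> G}"
definition rep :: "'g set \<Rightarrow> 'g" where "rep C = (SOME y. y \<in> C)"

lemma mem_lcos: "z \<in> y <# I \<longleftrightarrow> (\<exists>h\<in>I. z = y \<otimes> h)"
  by (auto simp: l_coset_def)

lemma lcos_eq:
  assumes y: "y \<in> G" and g: "g \<in> y <# I"
  shows "g <# I = y <# I"
proof -
  obtain h0 where h0: "h0 \<in> I" "g = y \<otimes> h0" using g mem_lcos by blast
  have yF: "y \<in> carrier H" using y GF by auto
  have h0F: "h0 \<in> carrier H" using h0 IF by auto
  show ?thesis
  proof (rule Set.set_eqI)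
    fix z
    show "z \<in> g <# I \<longleftrightarrow> z \<in> y <# I"
    proof
      assume "z \<in> g <# I"
      then obtain h where h: "h \<in> I" "z = g \<otimes> h" using mem_lcos by blast
      have "h0 \<otimes> h \<in> I" by (rule subgroup.m_closed[OF I_sub h0(1) h(1)])
      moreover have "z = y \<otimes> (h0 \<otimes> h)" using h h0 yF h0F IF by (auto simp: m_assoc)
      ultimately show "z \<in> y <# I" using mem_lcos by blast
    next
      assume "z \<in> y <# I"
      then obtain h where h: "h \<in> I" "z = y \<otimes> h" using mem_lcos by blast
      have "inv h0 \<otimes> h \<in> I" by (rule subgroup.m_closed[OF I_sub subgroup.m_inv_closed[OF I_sub h0(1)] h(1)])
      moreover have "h \<in> carrier H" using h IF by auto
      hence "z = g \<otimes> (inv h0 \<otimes> h)" using h h0 yF h0F by (simp add: m_assoc)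
      ultimately show "z \<in> g <# I" using mem_lcos by blast
    qed
  qed
qed

lemma self_lcos: "y \<in> carrier H \<Longrightarrow> y \<in> y <# I"
  using mem_lcos subgroup.one_closed[OF I_sub] by force

lemma rep_props:
  assumes C: "C \<in> CS"
  shows "rep C \<in> C" "rep C \<in> G" "C = rep C <# I"
proof -
  obtain y where y: "y \<in> G" "C = y <# I" using C by (auto simp: CS_def)
  have "y \<in> C" using y self_lcos GF by auto
  thus rc: "rep C \<in> C" unfolding rep_def by (rule someI)
  then obtain h where h: "h \<in> I" "rep C = y \<otimes> h" using y mem_lcos by blast
  show "rep C \<in> G" using h y IG subgroup.m_closed[OF G_sub] by auto
  show "C = rep C <# I" using lcos_eq[OF y(1)] rc y by simp
qed

lemma I_lcos: "h \<in> I \<Longrightarrow> h <# I = I"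
proof -
  assume h: "h \<in> I"
  have "\<one> \<in> G" by (rule subgroup.one_closed[OF G_sub])
  moreover have "h \<in> \<one> <# I" using h IF mem_lcos by force
  ultimately have "h <# I = \<one> <# I" by (rule lcos_eq)
  moreover have "\<one> <# I = I" using IF by (force simp: mem_lcos)
  ultimately show ?thesis by simp
qed

lemma I_CS: "I \<in> CS"
proof -
  have "\<one> <# I = I" using I_lcos subgroup.one_closed[OF I_sub] by blast
  thus ?thesis unfolding CS_def using subgroup.one_closed[OF G_sub] by force
qed

lemma rep_I_iff: "C \<in> CS \<Longrightarrow> rep C \<in> I \<longleftrightarrow> C = I"
  using rep_props I_lcos by metis

lemma CS_fin: "finite CS"
proof -
  have "CS \<subseteq> Pow (carrier H)"
    using GF IF by (auto simp: CS_def l_coset_def)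
  thus ?thesis using finH finite_subset by blast
qed

lemma b_trace: "b = (\<lambda>x. \<Sum>C\<in>CS. ga_conj H (rep C) bt x)"
  using btr by (simp add: ga_trace_def CS_def rep_def)

lemma bY: "ga_mult H b Y = (\<lambda>x. \<Sum>C\<in>CS. ga_mult H (ga_conj H (rep C) bt) Y x)"
  by (subst b_trace) (rule mult_sum_l)

lemma bc_eq: "ga_mult H b c = bt"
proof (rule ext)
  fix x
  have "ga_mult H b c x = (\<Sum>C\<in>CS. ga_mult H (ga_conj H (rep C) bt) c x)" by (simp add: bY)
  also have "\<dots> = (\<Sum>C\<in>CS. if C = I then bt x else 0)"
  proof (rule sum.cong[OF refl])
    fix C assume C: "C \<in> CS"
    have r: "rep C \<in> carrier H" using rep_props(2)[OF C] GF by auto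
    have o: "\<one> \<in> carrier H" by simp
    have cc1: "ga_conj H \<one> c = c" by (rule conj_one[OF c_F])
    have "ga_mult H (ga_conj H (rep C) bt) c = (if ga_conj H (rep C) c = c then ga_conj H (rep C) bt else (\<lambda>_. 0))"
      using conj_bt_c[OF r o] cc1 by simp
    moreover have "ga_conj H (rep C) c = c \<longleftrightarrow> C = I"
      using I_iff[OF rep_props(2)[OF C]] rep_I_iff[OF C] by simp
    moreover have "C = I \<Longrightarrow> ga_conj H (rep C) bt = bt"
      using bt_fix_I rep_I_iff[OF C] by simp
    ultimately show "ga_mult H (ga_conj H (rep C) bt) c x = (if C = I then bt x else 0)" by auto
  qed
  also have "\<dots> = bt x" using CS_fin I_CS by (simp add: sum.delta)
  finally show "ga_mult H b c x = bt x" .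
qed

lemma bbt: "ga_mult H b bt = bt"
proof -
  have "ga_mult H b bt = ga_mult H b (ga_mult H c bt)" by (simp add: cbt_eq)
  also have "\<dots> = bt" by (simp add: mult_assoc[symmetric] bc_eq btbt)
  finally show ?thesis .
qed

lemma btb: "ga_mult H bt b = bt"
  using center_comm[OF bZ bt_G] bbt by simp

lemma IH_fix_bt: "h \<in> IH \<Longrightarrow> ga_conj H h bt = bt"
proof -
  assume h: "h \<in> IH"
  hence hF: "h \<in> carrier H" and hc: "ga_conj H h c = c" by (auto simp: inertia_def)
  have "ga_conj H h (ga_mult H b c) = ga_mult H b c" using conj_mult[OF hF, of b c] bst hF hc by simp
  thus ?thesis by (simp add: bc_eq)
qed

lemma b_conjc: "x \<in> carrier H \<Longrightarrow> ga_mult H b (ga_conj H x c) = ga_conj H x bt"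
  using conj_mult[of x b c] bst bc_eq by simp

lemma Hconj_Gconj:
  assumes q: "q \<in> carrier H"
  shows "\<exists>x\<in>G. ga_conj H q c = ga_conj H x c"
proof (rule ccontr)
  assume nx: "\<not> (\<exists>x\<in>G. ga_conj H q c = ga_conj H x c)"
  have "ga_mult H b (ga_conj H q c) = (\<lambda>_. 0)"
  proof (rule ext)
    fix x
    have "ga_mult H b (ga_conj H q c) x = (\<Sum>C\<in>CS. ga_mult H (ga_conj H (rep C) bt) (ga_conj H q c) x)"
      by (simp add: bY)
    also have "\<dots> = 0"
    proof (rule sum.neutral, rule ballI)
      fix C assume C: "C \<in> CS"
      have r: "rep C \<in> carrier H" using rep_props(2)[OF C] GF by auto
      have "ga_conj H (rep C) c \<noteq> ga_conj H q c" using nx rep_props(2)[OF C] by metis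
      thus "ga_mult H (ga_conj H (rep C) bt) (ga_conj H q c) x = 0"
        using conj_bt_c[OF r q] by simp
    qed
    finally show "ga_mult H b (ga_conj H q c) x = 0" .
  qed
  moreover have "ga_conj H q bt \<noteq> (\<lambda>_. 0)" using conj_zero_iff[OF q bt_F] bt_nz by simp
  ultimately show False using b_conjc[OF q] by simp
qed

lemma dl_decomp:
  assumes a: "a \<in> grp_alg H A" and A: "finite A"
  shows "a = (\<lambda>x. \<Sum>g\<in>A. a g * dl g x)"
proof (rule ext)
  fix x
  have "(\<Sum>g\<in>A. a g * dl g x) = (\<Sum>g\<in>A. if g = x then a x else 0)"
    by (rule sum.cong[OF refl]) (auto simp: dl_def)
  also have "\<dots> = a x" using a A by (auto simp: sum.delta' grp_alg_iff)
  finally show "a x = (\<Sum>g\<in>A. a g * dl g x)" by simp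
qed

lemma grp_alg_sum: "(\<And>i. i \<in> S \<Longrightarrow> f i \<in> grp_alg H A) \<Longrightarrow> (\<lambda>x. \<Sum>i\<in>S. f i x) \<in> grp_alg H A"
  by (auto simp: grp_alg_iff intro: sum.neutral)

lemma grp_alg_scale: "f \<in> grp_alg H A \<Longrightarrow> (\<lambda>x. k * f x) \<in> grp_alg H A"
  by (auto simp: grp_alg_iff)

lemma cac_I:
  assumes a: "a \<in> grp_alg H G"
  shows "ga_mult H (ga_mult H c a) c \<in> grp_alg H I"
proof -
  have finG: "finite G" using GF finH finite_subset by blast
  have "ga_mult H (ga_mult H c a) c = ga_mult H (ga_mult H c (\<lambda>x. \<Sum>g\<in>G. a g * dl g x)) c"
    using dl_decomp[OF a finG] by simp
  also have "\<dots> = (\<lambda>x. \<Sum>g\<in>G. a g * ga_mult H (ga_mult H c (dl g)) c x)"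
    by (simp add: mult_sum_r mult_sum_l mult_scale_r mult_scale_l)
  finally have eq: "ga_mult H (ga_mult H c a) c = (\<lambda>x. \<Sum>g\<in>G. a g * ga_mult H (ga_mult H c (dl g)) c x)" .
  have "(\<lambda>x. a g * ga_mult H (ga_mult H c (dl g)) c x) \<in> grp_alg H I" if g: "g \<in> G" for g
  proof (cases "g \<in> I")
    case True
    have "ga_mult H (ga_mult H c (dl g)) c \<in> grp_alg H I"
      by (intro mult_closed[OF I_sub] c_I dl_in True)
    thus ?thesis by (rule grp_alg_scale)
  next
    case False
    have gF: "g \<in> carrier H" using g GF by auto
    have "ga_mult H (ga_mult H c (dl g)) c = ga_mult H (ga_mult H c (ga_conj H g c)) (dl g)"
      by (simp add: mult_assoc dl_conj_comm[OF gF])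
    also have "ga_mult H c (ga_conj H g c) = (\<lambda>_. 0)"
    proof -
      have "ga_conj H \<one> c \<noteq> ga_conj H g c" using False I_iff[OF g] conj_one[OF c_F] by simp
      thus ?thesis using conjc_orth[of \<one> g] gF conj_one[OF c_F] by simp
    qed
    finally show ?thesis by (simp add: grp_alg_iff)
  qed
  hence "(\<lambda>x. \<Sum>g\<in>G. a g * ga_mult H (ga_mult H c (dl g)) c x) \<in> grp_alg H I"
    by (rule grp_alg_sum)
  thus ?thesis using eq by simp
qed

lemma corner_I:
  assumes a: "a \<in> grp_alg H G"
  shows "ga_mult H (ga_mult H bt a) bt \<in> grp_alg H I"
proof -
  have "ga_mult H (ga_mult H bt a) bt = ga_mult H (ga_mult H bt (ga_mult H (ga_mult H c a) c)) bt"
    by (simp add: mult_assoc[symmetric] btc_eq) (simp add: mult_assoc cbt_eq)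
  also have "\<dots> \<in> grp_alg H I"
    by (intro mult_closed[OF I_sub] bt_I cac_I a)
  finally show ?thesis .
qed

end



context mctx begin

lemma conj_pt: "h \<in> carrier H \<Longrightarrow> x \<in> carrier H \<Longrightarrow> ga_conj H h a x = a (inv h \<otimes> x \<otimes> h)"
  by (simp add: ga_conj_def)

lemma fix_pt:
  assumes h: "h \<in> carrier H" and x: "x \<in> carrier H" and fx: "ga_conj H (inv h) a = a"
  shows "a (h \<otimes> x \<otimes> inv h) = a x"
proof -
  have "ga_conj H (inv h) a x = a x" using fx by simp
  thus ?thesis using h x by (simp add: ga_conj_def)
qed

lemma BR1:
  assumes P: "subgroup P H" and cP: "card P = p ^ n" and PIH: "P \<subseteq> IH"
    and br: "brauer H I P bt \<noteq> (\<lambda>_. 0)"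
  shows "brauer H G P b \<noteq> (\<lambda>_. 0)"
proof -
  have PF: "P \<subseteq> carrier H" by (rule subgroup.subset[OF P])
  obtain g where g: "brauer H I P bt g \<noteq> 0" using br by auto
  hence gC: "g \<in> centralizer_in H I P" and btg: "bt g \<noteq> 0" by (auto simp: brauer_def split: if_splits)
  hence gI: "g \<in> I" and gcomm: "\<And>q. q \<in> P \<Longrightarrow> g \<otimes> q = q \<otimes> g" by (auto simp: centralizer_in_def)
  have gF: "g \<in> carrier H" using gI IF by auto
  have "bt g = (\<Sum>y\<in>carrier H. b y * c (inv y \<otimes> g))" using mult_in[OF gF, of b c] by (simp add: bc_eq)
  also have "\<dots> = (\<Sum>y\<in>{y\<in>carrier H. \<forall>q\<in>P. q \<otimes> y \<otimes> inv q = y}. b y * c (inv y \<otimes> g))"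
  proof (rule orbit_sum[OF P cP prime_p charp finH])
    fix q y assume q: "q \<in> P" and y: "y \<in> carrier H"
    have qF: "q \<in> carrier H" using q PF by auto
    show "q \<otimes> y \<otimes> inv q \<in> carrier H" using qF y by simp
    have qi: "inv q \<in> P" by (rule subgroup.m_inv_closed[OF P q])
    have bq: "b (q \<otimes> y \<otimes> inv q) = b y" by (rule fix_pt[OF qF y]) (use bst qF in simp)
    have ciH: "inv q \<in> IH" using qi PIH by auto
    have cfix: "ga_conj H (inv q) c = c" using ciH by (simp add: inertia_def)
    have z: "inv y \<otimes> g \<in> carrier H" using y gF by simp
    have "inv (q \<otimes> y \<otimes> inv q) \<otimes> g = q \<otimes> (inv y \<otimes> g) \<otimes> inv q"
    proof -
      have "inv (q \<otimes> y \<otimes> inv q) \<otimes> g = q \<otimes> (inv y \<otimes> (inv q \<otimes> g))" using qF y gF by (simp add: inv_mult_group m_assoc)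
      also have "inv q \<otimes> g = g \<otimes> inv q"
        using gcomm[OF qi] by simp
      finally show ?thesis using qF y gF by (simp add: m_assoc)
    qed
    hence "c (inv (q \<otimes> y \<otimes> inv q) \<otimes> g) = c (inv y \<otimes> g)" using fix_pt[OF qF z cfix] by simp
    thus "b (q \<otimes> y \<otimes> inv q) * c (inv (q \<otimes> y \<otimes> inv q) \<otimes> g) = b y * c (inv y \<otimes> g)" using bq by simp
  next
    fix y assume "y \<in> carrier H" thus "\<one> \<otimes> y \<otimes> inv \<one> = y" by simp
  next
    fix q r y assume "q \<in> P" "r \<in> P" "y \<in> carrier H"
    hence "q \<in> carrier H" "r \<in> carrier H" using PF by auto
    thus "q \<otimes> r \<otimes> y \<otimes> inv (q \<otimes> r) = q \<otimes> (r \<otimes> y \<otimes> inv r) \<otimes> inv q"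
      using \<open>y \<in> carrier H\<close> by (simp add: m_assoc inv_mult_group)
  qed
  finally have "(\<Sum>y\<in>{y\<in>carrier H. \<forall>q\<in>P. q \<otimes> y \<otimes> inv q = y}. b y * c (inv y \<otimes> g)) \<noteq> 0" using btg by simp
  then obtain y where y0: "y \<in> {y\<in>carrier H. \<forall>q\<in>P. q \<otimes> y \<otimes> inv q = y}" and byc: "b y * c (inv y \<otimes> g) \<noteq> 0"
    by (rule sum.not_neutral_contains_not_neutral)
  have y: "y \<in> carrier H" "\<forall>q\<in>P. q \<otimes> y \<otimes> inv q = y" using y0 by auto
  have byn: "b y \<noteq> 0" using byc by auto
  have yG: "y \<in> G" using byn b_G by (auto simp: grp_alg_iff)
  have "y \<otimes> q = q \<otimes> y" if q: "q \<in> P" for q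
  proof -
    have qF: "q \<in> carrier H" using q PF by auto
    have "q \<otimes> y \<otimes> inv q \<otimes> q = y \<otimes> q" using y q by simp
    thus ?thesis using qF y by (simp add: m_assoc)
  qed
  hence "y \<in> centralizer_in H G P" using yG by (simp add: centralizer_in_def)
  hence "brauer H G P b y \<noteq> 0" using byn by (simp add: brauer_def)
  thus ?thesis by auto
qed

lemma cmul: "x \<in> carrier H \<Longrightarrow> a \<in> carrier H \<Longrightarrow> d \<in> carrier H \<Longrightarrow>
   (inv x \<otimes> a \<otimes> x) \<otimes> (inv x \<otimes> d \<otimes> x) = inv x \<otimes> (a \<otimes> d) \<otimes> x"
  by (simp add: m_assoc)

lemma cinv: "x \<in> carrier H \<Longrightarrow> a \<in> carrier H \<Longrightarrow> inv (inv x \<otimes> a \<otimes> x) = inv x \<otimes> inv a \<otimes> x"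
  by (simp add: inv_mult_group m_assoc)

lemma BR2:
  assumes Q: "subgroup Q H" and cQ: "card Q = p ^ n" and br: "brauer H G Q b \<noteq> (\<lambda>_. 0)"
  shows "\<exists>Q'. subgroup Q' H \<and> card Q' = card Q \<and> Q' \<subseteq> IH \<and> brauer H I Q' bt \<noteq> (\<lambda>_. 0)"
proof -
  have QF: "Q \<subseteq> carrier H" by (rule subgroup.subset[OF Q])
  obtain g where g: "brauer H G Q b g \<noteq> 0" using br by auto
  hence gC: "g \<in> centralizer_in H G Q" and bg: "b g \<noteq> 0" by (auto simp: brauer_def split: if_splits)
  hence gG: "g \<in> G" and gcomm: "\<And>q. q \<in> Q \<Longrightarrow> g \<otimes> q = q \<otimes> g" by (auto simp: centralizer_in_def)
  have gF: "g \<in> carrier H" using gG GF by auto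
  define Ob where "Ob = (\<lambda>x. ga_conj H x c) ` G"
  define \<phi> where "\<phi> = (\<lambda>C. ga_conj H (rep C) c)"
  have finG: "finite G" using GF finH finite_subset by blast
  have finOb: "finite Ob" unfolding Ob_def using finG by simp
  have inj: "inj_on \<phi> CS"
  proof (rule inj_onI)
    fix C D assume C: "C \<in> CS" and D: "D \<in> CS" and eq: "\<phi> C = \<phi> D"
    have rC: "rep C \<in> G" and rD: "rep D \<in> G" using rep_props C D by auto
    have rCF: "rep C \<in> carrier H" and rDF: "rep D \<in> carrier H" using rC rD GF by auto
    have "ga_conj H (inv (rep C) \<otimes> rep D) c = ga_conj H (inv (rep C)) (ga_conj H (rep D) c)"
      using rCF rDF by (simp add: conj_conj)
    also have "\<dots> = ga_conj H (inv (rep C)) (ga_conj H (rep C) c)" using eq by (simp add: \<phi>_def)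
    also have "\<dots> = c" by (rule conj_inv[OF rCF c_F])
    finally have cc: "ga_conj H (inv (rep C) \<otimes> rep D) c = c" .
    have "inv (rep C) \<otimes> rep D \<in> G"
      by (rule subgroup.m_closed[OF G_sub subgroup.m_inv_closed[OF G_sub rC] rD])
    hence hI: "inv (rep C) \<otimes> rep D \<in> I" using cc by (simp add: inertia_def)
    have "rep D = rep C \<otimes> (inv (rep C) \<otimes> rep D)" using rCF rDF by simp
    hence "rep D \<in> rep C <# I" using hI mem_lcos by blast
    hence "rep D <# I = rep C <# I" by (rule lcos_eq[OF rC])
    thus "C = D" using rep_props(3)[OF C] rep_props(3)[OF D] by simp
  qed
  have img: "\<phi> ` CS = Ob"
  proof
    show "\<phi> ` CS \<subseteq> Ob" unfolding Ob_def \<phi>_def using rep_props(2) by auto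
    show "Ob \<subseteq> \<phi> ` CS"
    proof
      fix e assume "e \<in> Ob"
      then obtain x where x: "x \<in> G" "e = ga_conj H x c" by (auto simp: Ob_def)
      have xF: "x \<in> carrier H" using x GF by auto
      define C where "C = x <# I"
      have C: "C \<in> CS" unfolding C_def CS_def using x by auto
      have "rep C \<in> x <# I" using rep_props(1)[OF C] C_def by simp
      then obtain h where h: "h \<in> I" "rep C = x \<otimes> h" using mem_lcos by blast
      have hF: "h \<in> carrier H" using h IF by auto
      have "\<phi> C = ga_conj H x (ga_conj H h c)" using h xF hF by (simp add: \<phi>_def conj_conj)
      also have "ga_conj H h c = c" using h by (simp add: inertia_def)
      finally have "\<phi> C = e" using x by simp
      from this[symmetric] C show "e \<in> \<phi> ` CS" by (rule image_eqI)
    qed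
  qed
  have "b g = (\<Sum>C\<in>CS. ga_conj H (rep C) bt g)" by (subst b_trace) simp
  also have "\<dots> = (\<Sum>C\<in>CS. ga_mult H b (\<phi> C) g)"
  proof (rule sum.cong[OF refl])
    fix C assume "C \<in> CS"
    hence "rep C \<in> carrier H" using rep_props(2) GF by auto
    thus "ga_conj H (rep C) bt g = ga_mult H b (\<phi> C) g" by (simp add: \<phi>_def b_conjc)
  qed
  also have "\<dots> = (\<Sum>e\<in>Ob. ga_mult H b e g)"
    using sum.reindex[OF inj, of "\<lambda>e. ga_mult H b e g"] img by simp
  also have "\<dots> = (\<Sum>e\<in>{e\<in>Ob. \<forall>q\<in>Q. ga_conj H q e = e}. ga_mult H b e g)"
  proof (rule orbit_sum[OF Q cQ prime_p charp finOb])
    fix q e assume q: "q \<in> Q" and e: "e \<in> Ob"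
    have qF: "q \<in> carrier H" using q QF by auto
    obtain x where x: "x \<in> G" "e = ga_conj H x c" using e by (auto simp: Ob_def)
    have xF: "x \<in> carrier H" using x GF by auto
    obtain x' where x': "x' \<in> G" "ga_conj H (q \<otimes> x) c = ga_conj H x' c" using Hconj_Gconj[of "q \<otimes> x"] qF xF by auto
    show "ga_conj H q e \<in> Ob" using x x' qF xF by (auto simp: Ob_def conj_conj)
    have "inv q \<otimes> g \<otimes> q = inv q \<otimes> (g \<otimes> q)" using qF gF by (simp add: m_assoc)
    also have "\<dots> = inv q \<otimes> (q \<otimes> g)" using gcomm[OF q] by simp
    also have "\<dots> = g" using qF gF by simp
    finally have qg: "inv q \<otimes> g \<otimes> q = g" .
    have "ga_mult H b (ga_conj H q e) = ga_conj H q (ga_mult H b e)" using conj_mult[OF qF, of b e] bst qF by simp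
    thus "ga_mult H b (ga_conj H q e) g = ga_mult H b e g" using qF gF qg by (simp add: ga_conj_def)
  next
    fix e assume "e \<in> Ob"
    then obtain x where "e = ga_conj H x c" by (auto simp: Ob_def)
    thus "ga_conj H \<one> e = e" using conj_one[OF conj_F] by simp
  next
    fix q r e assume "q \<in> Q" "r \<in> Q" "e \<in> Ob"
    hence "q \<in> carrier H" "r \<in> carrier H" using QF by auto
    thus "ga_conj H (q \<otimes> r) e = ga_conj H q (ga_conj H r e)" by (simp add: conj_conj)
  qed
  finally have "(\<Sum>e\<in>{e\<in>Ob. \<forall>q\<in>Q. ga_conj H q e = e}. ga_mult H b e g) \<noteq> 0" using bg by simp
  then obtain e where e0: "e \<in> {e\<in>Ob. \<forall>q\<in>Q. ga_conj H q e = e}" and beg: "ga_mult H b e g \<noteq> 0"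
    by (rule sum.not_neutral_contains_not_neutral)
  have eOb: "e \<in> Ob" and efix: "\<And>q. q \<in> Q \<Longrightarrow> ga_conj H q e = e" using e0 by auto
  obtain x where x: "x \<in> G" "e = ga_conj H x c" using eOb by (auto simp: Ob_def)
  have xF: "x \<in> carrier H" using x GF by auto
  have "ga_conj H x bt g \<noteq> 0" using beg b_conjc[OF xF] x by simp
  hence btg': "bt (inv x \<otimes> g \<otimes> x) \<noteq> 0" using xF gF by (simp add: ga_conj_def)
  define Q' where "Q' = (\<lambda>q. inv x \<otimes> q \<otimes> x) ` Q"
  have Q'F: "Q' \<subseteq> carrier H" unfolding Q'_def using QF xF by auto
  have sQ': "subgroup Q' H"
  proof
    show "Q' \<subseteq> carrier H" by (rule Q'F)
    fix a d assume a: "a \<in> Q'" and d: "d \<in> Q'"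
    then obtain q r where qr: "q \<in> Q" "r \<in> Q" "a = inv x \<otimes> q \<otimes> x" "d = inv x \<otimes> r \<otimes> x" by (auto simp: Q'_def)
    have "q \<otimes> r \<in> Q" by (rule subgroup.m_closed[OF Q qr(1,2)])
    moreover have "q \<in> carrier H" "r \<in> carrier H" using qr QF by auto
    hence "a \<otimes> d = inv x \<otimes> (q \<otimes> r) \<otimes> x" using qr(3,4) cmul[OF xF] by simp
    ultimately show "a \<otimes> d \<in> Q'" unfolding Q'_def by auto
  next
    have "\<one> \<in> Q" by (rule subgroup.one_closed[OF Q])
    moreover have "inv x \<otimes> \<one> \<otimes> x = \<one>" using xF by simp
    ultimately show "\<one> \<in> Q'" unfolding Q'_def by (metis image_eqI)
  next
    fix a assume "a \<in> Q'"
    then obtain q where q: "q \<in> Q" "a = inv x \<otimes> q \<otimes> x" by (auto simp: Q'_def)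
    have "inv q \<in> Q" by (rule subgroup.m_inv_closed[OF Q q(1)])
    moreover have "q \<in> carrier H" using q QF by auto
    hence "inv a = inv x \<otimes> inv q \<otimes> x" using q(2) cinv[OF xF] by simp
    ultimately show "inv a \<in> Q'" unfolding Q'_def by auto
  qed
  have injc: "inj_on (\<lambda>q. inv x \<otimes> q \<otimes> x) Q"
  proof (rule inj_onI)
    fix q r assume q: "q \<in> Q" and r: "r \<in> Q" and eq: "inv x \<otimes> q \<otimes> x = inv x \<otimes> r \<otimes> x"
    have qF: "q \<in> carrier H" and rF: "r \<in> carrier H" using q r QF by auto
    have "q = x \<otimes> (inv x \<otimes> q \<otimes> x) \<otimes> inv x" using qF xF by (simp add: m_assoc)
    also have "\<dots> = x \<otimes> (inv x \<otimes> r \<otimes> x) \<otimes> inv x" using eq by simp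
    also have "\<dots> = r" using rF xF by (simp add: m_assoc)
    finally show "q = r" .
  qed
  have cQ': "card Q' = card Q" unfolding Q'_def by (rule card_image[OF injc])
  have Q'IH: "Q' \<subseteq> IH"
  proof
    fix a assume "a \<in> Q'"
    then obtain q where q: "q \<in> Q" "a = inv x \<otimes> q \<otimes> x" by (auto simp: Q'_def)
    have qF: "q \<in> carrier H" using q QF by auto
    have "ga_conj H a c = ga_conj H (inv x) (ga_conj H q (ga_conj H x c))"
      using q qF xF by (simp add: conj_conj m_assoc)
    also have "ga_conj H q (ga_conj H x c) = ga_conj H x c" using efix[OF q(1)] x by simp
    also have "ga_conj H (inv x) (ga_conj H x c) = c" by (rule conj_inv[OF xF c_F])
    finally show "a \<in> IH" using q qF xF by (simp add: inertia_def)
  qed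
  define g' where "g' = inv x \<otimes> g \<otimes> x"
  have g'I: "g' \<in> I" using btg' bt_I unfolding g'_def by (auto simp: grp_alg_iff)
  have "g' \<otimes> a = a \<otimes> g'" if a: "a \<in> Q'" for a
  proof -
    obtain q where q: "q \<in> Q" "a = inv x \<otimes> q \<otimes> x" using a by (auto simp: Q'_def)
    have qF: "q \<in> carrier H" using q QF by auto
    have "g' \<otimes> a = inv x \<otimes> (g \<otimes> q) \<otimes> x" unfolding g'_def using q(2) cmul[OF xF gF qF] by simp
    also have "g \<otimes> q = q \<otimes> g" by (rule gcomm[OF q(1)])
    also have "inv x \<otimes> (q \<otimes> g) \<otimes> x = a \<otimes> g'" unfolding g'_def using q(2) cmul[OF xF qF gF] by simp
    finally show ?thesis .
  qed
  hence "g' \<in> centralizer_in H I Q'" using g'I by (simp add: centralizer_in_def)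
  hence "brauer H I Q' bt g' \<noteq> 0" using btg' by (simp add: brauer_def g'_def)
  hence "brauer H I Q' bt \<noteq> (\<lambda>_. 0)" by auto
  thus ?thesis using sQ' cQ' Q'IH by blast
qed

end



lemma vs: "vector_space (\<lambda>(r::'k::field) (f::'a \<Rightarrow> 'k) x. r * f x)"
  by unfold_locales (simp_all add: fun_eq_iff algebra_simps)

context vector_space begin
lemma dim_strict:
  assumes W: "finite W" and V: "V \<subseteq> span W" and UV: "U \<subseteq> V" and sU: "subspace U"
    and v: "v \<in> V" "v \<notin> U"
  shows "dim U < dim V"
proof -
  obtain B where B: "B \<subseteq> U" "independent B" "U \<subseteq> span B" "card B = dim U" by (rule basis_exists)
  obtain B' where B': "B' \<subseteq> V" "independent B'" "V \<subseteq> span B'" "card B' = dim V" by (rule basis_exists)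
  have fB': "finite B'" using independent_span_bound[OF W B'(2)] B'(1) V by auto
  have spB: "span B \<subseteq> U" using B(1) sU by (simp add: span_minimal)
  have vB: "v \<notin> span B" using spB v by auto
  have ind: "independent (insert v B)" by (rule independent_insertI[OF vB B(2)])
  have "insert v B \<subseteq> span B'" using B(1) UV v(1) B'(3) by auto
  hence c1: "card (insert v B) \<le> card B'" using independent_span_bound[OF fB' ind] by auto
  have "B \<subseteq> span B'" using B(1) UV B'(3) by auto
  hence fB: "finite B" using independent_span_bound[OF fB' B(2)] by auto
  have "v \<notin> B" using B(1) v(2) by auto
  thus ?thesis using c1 fB B(4) B'(4) by simp
qed
end

lemma sum_fun_app: "(sum f A) x = sum (\<lambda>a. f a x) A"
  by (induction A rule: infinite_finite_induct) auto

context mctx begin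

lemma brauer_add: "brauer H A Q (ga_add a d) = ga_add (brauer H A Q a) (brauer H A Q d)"
  by (rule ext) (simp add: brauer_def ga_add_def)

lemma brauer_zero: "brauer H A Q (\<lambda>_. 0) = (\<lambda>_. 0)"
  by (rule ext) (simp add: brauer_def)

lemma exists_prim:
  assumes PIH: "P \<subseteq> IH" and br: "brauer H I P bt \<noteq> (\<lambda>_. 0)"
  shows "\<exists>i. prim_idem H (ga_fixed H P (ga_block_alg H I bt)) i \<and> brauer H I P i \<noteq> (\<lambda>_. 0)"
proof -
  interpret V: vector_space "\<lambda>(r::'k) (f::'g \<Rightarrow> 'k) x. r * f x" by (rule vs)
  define S where "S = ga_fixed H P (ga_block_alg H I bt)"
  define E where "E = (\<lambda>e. e \<in> S \<and> ga_idem H e \<and> brauer H I P e \<noteq> (\<lambda>_. 0))"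
  define W where "W = (dl :: 'g \<Rightarrow> 'g \<Rightarrow> 'k) ` carrier H"
  define L where "L = (\<lambda>e::'g \<Rightarrow> 'k. range (ga_mult H e))"
  have finW: "finite W" unfolding W_def using finH by simp
  have btS: "bt \<in> S"
  proof -
    have "bt \<in> ga_block_alg H I bt" unfolding ga_block_alg_def using btbt bt_I by force
    thus ?thesis unfolding S_def ga_fixed_def using IH_fix_bt PIH by auto
  qed
  have Ebt: "E bt" unfolding E_def using btS btbt br by (simp add: ga_idem_def)
  obtain e where e: "E e" and emin: "\<forall>y. E y \<longrightarrow> V.dim (L e) \<le> V.dim (L y)"
    using ex_has_least_nat[of E bt "\<lambda>e. V.dim (L e)"] Ebt by blast
  have Lsub: "V.subspace (L a)" for a
  proof (rule V.subspaceI)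
    have "ga_mult H a (\<lambda>_. 0) = 0" by (simp add: zero_fun_def)
    thus "0 \<in> L a" unfolding L_def by (metis rangeI)
  next
    fix x y assume "x \<in> L a" "y \<in> L a"
    then obtain u w where "x = ga_mult H a u" "y = ga_mult H a w" by (auto simp: L_def)
    hence "x + y = ga_mult H a (ga_add u w)" using mult_add_r[of a u w] by (simp add: ga_add_def plus_fun_def)
    thus "x + y \<in> L a" unfolding L_def by simp
  next
    fix r x assume "x \<in> L a"
    then obtain u where "x = ga_mult H a u" by (auto simp: L_def)
    hence "(\<lambda>z. r * x z) = ga_mult H a (\<lambda>z. r * u z)" by (simp add: mult_scale_r)
    thus "(\<lambda>z. r * x z) \<in> L a" unfolding L_def by simp
  qed
  have LW: "L a \<subseteq> V.span W" for a
  proof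
    fix f assume "f \<in> L a"
    then obtain u where fu: "f = ga_mult H a u" by (auto simp: L_def)
    have fF: "f \<in> grp_alg H (carrier H)" using fu mult_in_F by simp
    have "f = (\<lambda>x. \<Sum>g\<in>carrier H. f g * dl g x)" by (rule dl_decomp[OF fF finH])
    also have "\<dots> = (\<Sum>g\<in>carrier H. (\<lambda>x. f g * dl g x))" by (rule ext) (simp add: sum_fun_app)
    also have "\<dots> \<in> V.span W"
      by (rule V.span_sum, rule V.span_scale, rule V.span_base) (auto simp: W_def)
    finally show "f \<in> V.span W" .
  qed
  have strict: "V.dim (L f1) < V.dim (L e)"
    if f1: "ga_idem H f1" and f2nz: "f2 \<noteq> (\<lambda>_. 0)" and f2: "ga_idem H f2"
      and o1: "ga_mult H f1 f2 = (\<lambda>_. 0)" and o2: "ga_mult H f2 f1 = (\<lambda>_. 0)" and sum: "e = ga_add f1 f2"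
    for f1 f2
  proof -
    have ef1: "ga_mult H e f1 = f1" using f1 o2 sum mult_add_l[of f1 f2 f1] by (simp add: ga_add_def ga_idem_def)
    have f2e: "ga_mult H f2 e = f2" using f2 o2 sum mult_add_r[of f2 f1 f2] by (simp add: ga_add_def ga_idem_def)
    have sub: "L f1 \<subseteq> L e"
    proof
      fix x assume "x \<in> L f1"
      then obtain u where "x = ga_mult H f1 u" by (auto simp: L_def)
      hence "x = ga_mult H e (ga_mult H f1 u)" by (simp add: mult_assoc[symmetric] ef1)
      thus "x \<in> L e" by (simp add: L_def)
    qed
    have eL: "e \<in> L e" using e unfolding E_def L_def ga_idem_def by (metis rangeI)
    have enL: "e \<notin> L f1"
    proof
      assume "e \<in> L f1"
      then obtain u where u: "e = ga_mult H f1 u" by (auto simp: L_def)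
      have "f2 = ga_mult H f2 (ga_mult H f1 u)" using f2e u by simp
      also have "\<dots> = (\<lambda>_. 0)" by (simp add: mult_assoc[symmetric] o2)
      finally show False using f2nz by simp
    qed
    show ?thesis by (rule V.dim_strict[OF finW LW sub Lsub eL enL])
  qed
  have enz: "e \<noteq> (\<lambda>_. 0)" using e brauer_zero unfolding E_def by auto
  have "prim_idem H S e"
    unfolding prim_idem_def
  proof (intro conjI ballI impI)
    show "e \<in> S" "e \<noteq> (\<lambda>_. 0)" "ga_idem H e" using e enz by (auto simp: E_def)
    fix e1 e2 assume e1: "e1 \<in> S" and e2: "e2 \<in> S"
      and h: "ga_idem H e1 \<and> ga_idem H e2 \<and> ga_mult H e1 e2 = (\<lambda>_. 0) \<and> ga_mult H e2 e1 = (\<lambda>_. 0) \<and> e = ga_add e1 e2"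
    show "e1 = (\<lambda>_. 0) \<or> e2 = (\<lambda>_. 0)"
    proof (rule ccontr)
      assume nz: "\<not> (e1 = (\<lambda>_. 0) \<or> e2 = (\<lambda>_. 0))"
      have "brauer H I P e = ga_add (brauer H I P e1) (brauer H I P e2)" using h by (simp add: brauer_add)
      hence "brauer H I P e1 \<noteq> (\<lambda>_. 0) \<or> brauer H I P e2 \<noteq> (\<lambda>_. 0)"
        using e unfolding E_def by (auto simp: ga_add_def)
      thus False
      proof
        assume b1: "brauer H I P e1 \<noteq> (\<lambda>_. 0)"
        hence "E e1" using e1 h by (simp add: E_def)
        moreover have "V.dim (L e1) < V.dim (L e)" using strict[of e1 e2] h nz by blast
        ultimately show False using emin by (meson not_le)
      next
        assume b2: "brauer H I P e2 \<noteq> (\<lambda>_. 0)"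
        hence "E e2" using e2 h by (simp add: E_def)
        moreover have "e = ga_add e2 e1" using h by (auto simp: ga_add_def add.commute)
        hence "V.dim (L e2) < V.dim (L e)" using strict[of e2 e1] h nz by blast
        ultimately show False using emin by (meson not_le)
      qed
    qed
  qed
  thus ?thesis using e unfolding S_def E_def by blast
qed

end



context mctx begin

lemma corner_prim:
  assumes prim: "prim_idem H (ga_fixed H P (ga_block_alg H I bt)) i"
  shows "prim_idem H (ga_fixed H P (ga_block_alg H G b)) i"
proof -
  define SI where "SI = ga_fixed H P (ga_block_alg H I bt)"
  define SG where "SG = ga_fixed H P (ga_block_alg H G b)"
  have iSI: "i \<in> SI" and inz: "i \<noteq> (\<lambda>_. 0)" and ii: "ga_idem H i"
    and pr: "\<And>e1 e2. e1 \<in> SI \<Longrightarrow> e2 \<in> SI \<Longrightarrow> ga_idem H e1 \<Longrightarrow> ga_idem H e2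
       \<Longrightarrow> ga_mult H e1 e2 = (\<lambda>_. 0) \<Longrightarrow> ga_mult H e2 e1 = (\<lambda>_. 0) \<Longrightarrow> i = ga_add e1 e2
       \<Longrightarrow> e1 = (\<lambda>_. 0) \<or> e2 = (\<lambda>_. 0)"
    using prim unfolding prim_idem_def SI_def by blast+
  obtain a where a: "a \<in> grp_alg H I" "i = ga_mult H a bt" and ifix: "\<forall>q\<in>P. ga_conj H q i = i"
    using iSI unfolding SI_def ga_fixed_def ga_block_alg_def by blast
  have iI: "i \<in> grp_alg H I" using a mult_closed[OF I_sub a(1) bt_I] by simp
  have iG: "i \<in> grp_alg H G" using iI IG grp_alg_mono by blast
  have bti: "ga_mult H bt i = i"
  proof -
    have "ga_mult H bt i = ga_mult H (ga_mult H bt a) bt" using a by (simp add: mult_assoc)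
    also have "ga_mult H bt a = ga_mult H a bt" by (rule center_comm[OF btZ a(1)])
    finally show ?thesis using a by (simp add: mult_assoc btbt)
  qed
  have ibt: "ga_mult H i bt = i" using a by (simp add: mult_assoc btbt)
  have ib: "ga_mult H i b = i" using a by (simp add: mult_assoc btb)
  have iSG: "i \<in> SG" unfolding SG_def ga_fixed_def ga_block_alg_def using iG ib ifix by force
  have inner: "f \<in> SI" if f: "f \<in> SG" and fi: "ga_mult H i f = f" and fi2: "ga_mult H f i = f" for f
  proof -
    obtain a' where a': "a' \<in> grp_alg H G" "f = ga_mult H a' b" and ffix: "\<forall>q\<in>P. ga_conj H q f = f"
      using f unfolding SG_def ga_fixed_def ga_block_alg_def by blast
    have fG: "f \<in> grp_alg H G" using a' mult_closed[OF G_sub a'(1) b_G] by simp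
    have "f = ga_mult H (ga_mult H i f) i" using fi fi2 by simp
    also have "\<dots> = ga_mult H (ga_mult H (ga_mult H bt i) f) (ga_mult H i bt)" using bti ibt by simp
    also have "\<dots> = ga_mult H (ga_mult H bt (ga_mult H (ga_mult H i f) i)) bt" by (simp add: mult_assoc)
    also have "\<dots> = ga_mult H (ga_mult H bt f) bt" using fi fi2 by simp
    finally have fe: "f = ga_mult H (ga_mult H bt f) bt" .
    have fI: "f \<in> grp_alg H I" using corner_I[OF fG] fe by simp
    have "ga_mult H f bt = f" using fe by (metis mult_assoc btbt)
    hence "f \<in> ga_block_alg H I bt" unfolding ga_block_alg_def using fI by force
    thus "f \<in> SI" unfolding SI_def ga_fixed_def using ffix by simp
  qed
  show ?thesis unfolding prim_idem_def SG_def[symmetric]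
  proof (intro conjI ballI impI)
    show "i \<in> SG" "i \<noteq> (\<lambda>_. 0)" "ga_idem H i" using iSG inz ii by auto
    fix e1 e2 assume e1: "e1 \<in> SG" and e2: "e2 \<in> SG"
      and h: "ga_idem H e1 \<and> ga_idem H e2 \<and> ga_mult H e1 e2 = (\<lambda>_. 0) \<and> ga_mult H e2 e1 = (\<lambda>_. 0) \<and> i = ga_add e1 e2"
    have i1: "ga_mult H i e1 = e1" using h mult_add_l[of e1 e2 e1] by (simp add: ga_add_def ga_idem_def)
    have i1': "ga_mult H e1 i = e1" using h mult_add_r[of e1 e1 e2] by (simp add: ga_add_def ga_idem_def)
    have i2: "ga_mult H i e2 = e2" using h mult_add_l[of e1 e2 e2] by (simp add: ga_add_def ga_idem_def)
    have i2': "ga_mult H e2 i = e2" using h mult_add_r[of e2 e1 e2] by (simp add: ga_add_def ga_idem_def)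
    show "e1 = (\<lambda>_. 0) \<or> e2 = (\<lambda>_. 0)"
      by (rule pr[OF inner[OF e1 i1 i1'] inner[OF e2 i2 i2']]) (use h in auto)
  qed
qed

lemma main:
  "\<exists>P i. p_subgroup p P H \<and> P \<subseteq> inertia H (carrier H) c
      \<and> prim_idem H (ga_fixed H P (ga_block_alg H (inertia H G c) bt)) i
      \<and> max_brauer_pgroup p H (carrier H) G b P
      \<and> max_brauer_pgroup p H (inertia H (carrier H) c) (inertia H G c) bt P
      \<and> prim_idem H (ga_fixed H P (ga_block_alg H G b)) i
      \<and> brauer H G P i \<noteq> (\<lambda>_. 0)"
proof -
  define Good where "Good = (\<lambda>Q. p_subgroup p Q H \<and> Q \<subseteq> IH \<and> brauer H I Q bt \<noteq> (\<lambda>_. 0))"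
  have G1: "Good {\<one>}"
  proof -
    have "card {\<one>} = p ^ 0" by simp
    hence "p_subgroup p {\<one>} H" unfolding p_subgroup_def using triv_subgroup by blast
    moreover have "{\<one>} \<subseteq> IH" using subgroup.one_closed[OF IH_sub] by simp
    moreover have "brauer H I {\<one>} bt = bt"
    proof (rule ext)
      fix x show "brauer H I {\<one>} bt x = bt x"
        using bt_I IF by (auto simp: brauer_def centralizer_in_def grp_alg_iff)
    qed
    ultimately show ?thesis unfolding Good_def using bt_nz by simp
  qed
  have bound: "\<forall>Q. Good Q \<longrightarrow> card Q < Suc (card (carrier H))"
  proof (intro allI impI)
    fix Q assume "Good Q"
    hence "subgroup Q H" unfolding Good_def p_subgroup_def by simp
    hence "Q \<subseteq> carrier H" by (rule subgroup.subset)
    thus "card Q < Suc (card (carrier H))" using card_mono[OF finH] by (simp add: le_imp_less_Suc)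
  qed
  obtain P where P: "Good P" and Pmax: "\<forall>Q. Good Q \<longrightarrow> card Q \<le> card P"
    using Lattices_Big.ex_has_greatest_nat[OF G1 bound] by blast
  have Pps: "p_subgroup p P H" and PIH: "P \<subseteq> IH" and Pbr: "brauer H I P bt \<noteq> (\<lambda>_. 0)"
    using P unfolding Good_def by auto
  have Psub: "subgroup P H" and Pn: "\<exists>n. card P = p ^ n" using Pps unfolding p_subgroup_def by auto
  have PF: "P \<subseteq> carrier H" by (rule subgroup.subset[OF Psub])
  obtain i where prim: "prim_idem H (ga_fixed H P (ga_block_alg H I bt)) i" and bri: "brauer H I P i \<noteq> (\<lambda>_. 0)"
    using exists_prim[OF PIH Pbr] by blast
  have eqmax: "Q = P" if Q: "Q \<subseteq> carrier H" and PQ: "P \<subseteq> Q" and cq: "card Q \<le> card P" for Q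
  proof -
    have fQ: "finite Q" using Q finH finite_subset by blast
    have "card P \<le> card Q" by (rule card_mono[OF fQ PQ])
    hence "card P = card Q" using cq by simp
    thus "Q = P" using card_subset_eq[OF fQ PQ] by simp
  qed
  have m1: "max_brauer_pgroup p H (carrier H) G b P"
    unfolding max_brauer_pgroup_def
  proof (intro conjI allI impI)
    show "p_subgroup p P H" by (fact Pps)
    show "P \<subseteq> carrier H" by (fact PF)
    obtain n where n: "card P = p ^ n" using Pn by blast
    show "brauer H G P b \<noteq> (\<lambda>_. 0)" by (rule BR1[OF Psub n PIH Pbr])
    fix Q assume h: "p_subgroup p Q H \<and> Q \<subseteq> carrier H \<and> P \<subseteq> Q \<and> brauer H G Q b \<noteq> (\<lambda>_. 0)"
    hence Qs: "subgroup Q H" and "\<exists>n. card Q = p ^ n" by (auto simp: p_subgroup_def)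
    then obtain m where m: "card Q = p ^ m" by blast
    obtain Q' where Q': "subgroup Q' H" "card Q' = card Q" "Q' \<subseteq> IH" "brauer H I Q' bt \<noteq> (\<lambda>_. 0)"
      using BR2[OF Qs m] h by blast
    have "Good Q'" unfolding Good_def p_subgroup_def using Q' m by auto
    hence "card Q \<le> card P" using Pmax Q'(2) by auto
    thus "Q = P" by (rule eqmax[rotated 2]) (use h in auto)
  qed
  have m2: "max_brauer_pgroup p H IH I bt P"
    unfolding max_brauer_pgroup_def
  proof (intro conjI allI impI)
    show "p_subgroup p P H" by (fact Pps)
    show "P \<subseteq> IH" by (fact PIH)
    show "brauer H I P bt \<noteq> (\<lambda>_. 0)" by (fact Pbr)
    fix Q assume h: "p_subgroup p Q H \<and> Q \<subseteq> IH \<and> P \<subseteq> Q \<and> brauer H I Q bt \<noteq> (\<lambda>_. 0)"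
    hence "Good Q" by (simp add: Good_def)
    hence "card Q \<le> card P" using Pmax by auto
    moreover have "Q \<subseteq> carrier H" using h subgroup.subset[OF IH_sub] by auto
    ultimately show "Q = P" by (intro eqmax) (use h in auto)
  qed
  have iI: "i \<in> grp_alg H I"
  proof -
    obtain a where "a \<in> grp_alg H I" "i = ga_mult H a bt"
      using prim unfolding prim_idem_def ga_fixed_def ga_block_alg_def by blast
    thus ?thesis using mult_closed[OF I_sub _ bt_I] by simp
  qed
  have brG: "brauer H G P i \<noteq> (\<lambda>_. 0)"
  proof -
    obtain x where x: "brauer H I P i x \<noteq> 0" using bri by auto
    hence "x \<in> centralizer_in H I P" and "i x \<noteq> 0" by (auto simp: brauer_def split: if_splits)
    hence "x \<in> centralizer_in H G P" using IG by (auto simp: centralizer_in_def)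
    hence "brauer H G P i x \<noteq> 0" using \<open>i x \<noteq> 0\<close> by (simp add: brauer_def)
    thus ?thesis by auto
  qed
  show ?thesis by (intro exI conjI, rule Pps, rule PIH, rule prim, rule m1, rule m2, rule corner_prim[OF prim], rule brG)
qed

end

theorem mainTheorem9:
  fixes H :: "'g monoid" and G N :: "'g set" and p :: nat
    and b c bt :: "'g \<Rightarrow> 'k::alg_closed_field"
  assumes "prime p" and "CHAR('k) = p"
    and "group H" and "finite (carrier H)"
    and "G \<lhd> H" and "N \<lhd> H" and "N \<subseteq> G"
    and "is_block H G b" and "\<forall>h\<in>carrier H. ga_conj H h b = b"
    and "is_block H N c" and "ga_mult H b c \<noteq> (\<lambda>_. 0)"
    and "is_block H (inertia H G c) bt"
    and "ga_mult H bt c \<noteq> (\<lambda>_. 0)"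
    and "b = ga_trace H G (inertia H G c) bt"
  shows "\<exists>P i. p_subgroup p P H \<and> P \<subseteq> inertia H (carrier H) c
      \<and> prim_idem H (ga_fixed H P (ga_block_alg H (inertia H G c) bt)) i
      \<and> max_brauer_pgroup p H (carrier H) G b P
      \<and> max_brauer_pgroup p H (inertia H (carrier H) c) (inertia H G c) bt P
      \<and> prim_idem H (ga_fixed H P (ga_block_alg H G b)) i
      \<and> brauer H G P i \<noteq> (\<lambda>_. 0)"
proof -
  have "mctx H G N p b c bt"
    by (intro mctx.intro fgrp.intro fgrp_axioms.intro mctx_axioms.intro assms)
  thus ?thesis by (rule mctx.main)
qed


end
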